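(* Let $F$ be a formally real field, $(D,\bar{\ })$ an $F$-division algebra with involution, $n\in\mathbb{N}$, and $(A,\sigma)=(M_n(D),\bar{\ }^t)$. Let $a\in\operatorname{Sym}(D,\bar{\ })^\times$ and let $h_1,h_2\in\mathscr F_a$ be such that $[h_1\boxtimes h_2]\in I(A,\sigma)$. Then $[h_1]\in I(A,\sigma)$ or $[h_2]\in I(A,\sigma)$.
   Context: $(D,\bar{\ })$ is a division algebra with involution such that $(M_n(D),\bar{\ }^t)$ (conjugate transpose) is an $F$-algebra with involution (finite-dimensional, centre of degree $\le2$ over $F$, $F$-linear involution). $W(A,\sigma)$ is the Witt group of non-singular hermitian forms over $(A,\sigma)$ on finitely generated right $A$-modules; $[h]$ denotes the Witt class of a form $h$. Every finitely generated right $A$-module is isomorphic to $(D^n)^k$ for a unique $k$, the rank of a form on it; the parity of the rank is a Witt class invariant, and $I(A,\sigma)$ is the subgroup of classes of forms of even rank. $\operatorname{Sym}(D,\bar{\ })^\times$ is the set of invertible $a\in D$ with $\bar a=a$. For such $a$, $h_a:D^n\times D^n\to M_n(D)$, $h_a(x,y)=\bar x^tay$ ($x,y$ viewed as $1\times n$ row vectors), a hermitian form of rank one over $(A,\sigma)$. $\mathscr F_a=\{h_{a^{i_1}}\perp\cdots\perp h_{a^{i_\ell}}\mid \ell\in\mathbb{N},\ i_1,\ldots,i_\ell\in\mathbb{N}_0\}$ ($\perp$ orthogonal sum), and for $h_1=h_{a^{i_1}}\perp\cdots\perp h_{a^{i_k}}$, $h_2=h_{a^{j_1}}\perp\cdots\perp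 h_{a^{j_\ell}}$ in $\mathscr F_a$, $h_1\boxtimes h_2=\perp_{p=1}^k\perp_{q=1}^\ell h_{a^{i_p+j_q}}$. *)

theory Defs
  imports "Jordan_Normal_Form.Matrix"
begin

definition centre :: "'d::division_ring set" where
  "centre = {z. \<forall>x. z * x = x * z}"

(* F is given as (the image of) a subfield of D contained in the centre of D *)
definition central_subfield :: "'d::division_ring set \<Rightarrow> bool" where
  "central_subfield Fs \<longleftrightarrow> Fs \<subseteq> centre \<and> 0 \<in> Fs \<and> 1 \<in> Fs \<and>
     (\<forall>x\<in>Fs. \<forall>y\<in>Fs. x + y \<in> Fs \<and> x * y \<in> Fs) \<and>
     (\<forall>x\<in>Fs. - x \<in> Fs) \<and> (\<forall>x\<in>Fs. x \<noteq> 0 \<longrightarrow> inverse x \<in> Fs)"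

definition formally_real :: "'d::division_ring set \<Rightarrow> bool" where
  "formally_real Fs \<longleftrightarrow> \<not> (\<exists>xs. set xs \<subseteq> Fs \<and> - 1 = sum_list (map (\<lambda>x. x * x) xs))"

definition spanned_over :: "'d::division_ring set \<Rightarrow> 'd list \<Rightarrow> 'd set \<Rightarrow> bool" where
  "spanned_over Fs bs S \<longleftrightarrow>
     (\<forall>x\<in>S. \<exists>cs. length cs = length bs \<and> set cs \<subseteq> Fs \<and>
                 x = sum_list (map (\<lambda>(c,b). c * b) (zip cs bs)))"

definition fin_dim_over :: "'d::division_ring set \<Rightarrow> bool" where
  "fin_dim_over Fs \<longleftrightarrow> (\<exists>bs. spanned_over Fs bs UNIV)"

definition centre_deg_le2 :: "'d::division_ring set \<Rightarrow> bool" where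
  "centre_deg_le2 Fs \<longleftrightarrow> (\<exists>bs. length bs \<le> 2 \<and> set bs \<subseteq> centre \<and> spanned_over Fs bs centre)"

definition F_involution :: "'d::division_ring set \<Rightarrow> ('d \<Rightarrow> 'd) \<Rightarrow> bool" where
  "F_involution Fs bar \<longleftrightarrow>
     (\<forall>x y. bar (x + y) = bar x + bar y) \<and> (\<forall>x y. bar (x * y) = bar y * bar x) \<and>
     (\<forall>x. bar (bar x) = x) \<and> (\<forall>c\<in>Fs. bar c = c)"

definition sigma :: "('d \<Rightarrow> 'd) \<Rightarrow> 'd::division_ring mat \<Rightarrow> 'd mat" where
  "sigma bar M = transpose_mat (map_mat bar M)"

(* The module (D^n)^k is represented by k x n matrices (row r = r-th copy of D^n);
   the right A-action is matrix multiplication on the right. A form of rank k is a pair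
   (k, h) with h : (D^n)^k x (D^n)^k -> M_n(D). *)
type_synonym 'd form = "nat \<times> ('d mat \<Rightarrow> 'd mat \<Rightarrow> 'd mat)"

definition submodule :: "nat \<Rightarrow> nat \<Rightarrow> 'd::division_ring mat set \<Rightarrow> bool" where
  "submodule n k L \<longleftrightarrow> L \<subseteq> carrier_mat k n \<and> 0\<^sub>m k n \<in> L \<and>
     (\<forall>x\<in>L. \<forall>y\<in>L. x + y \<in> L) \<and> (\<forall>x\<in>L. \<forall>a\<in>carrier_mat n n. x * a \<in> L)"

definition A_linear :: "nat \<Rightarrow> nat \<Rightarrow> ('d::division_ring mat \<Rightarrow> 'd mat) \<Rightarrow> bool" where
  "A_linear n k f \<longleftrightarrow> (\<forall>x\<in>carrier_mat k n. f x \<in> carrier_mat n n) \<and>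
     (\<forall>x\<in>carrier_mat k n. \<forall>y\<in>carrier_mat k n. f (x + y) = f x + f y) \<and>
     (\<forall>x\<in>carrier_mat k n. \<forall>a\<in>carrier_mat n n. f (x * a) = f x * a)"

definition herm_form :: "('d::division_ring \<Rightarrow> 'd) \<Rightarrow> nat \<Rightarrow> 'd form \<Rightarrow> bool" where
  "herm_form bar n f \<longleftrightarrow> (case f of (k, h) \<Rightarrow>
     (\<forall>x\<in>carrier_mat k n. \<forall>y\<in>carrier_mat k n. h x y \<in> carrier_mat n n) \<and>
     (\<forall>x\<in>carrier_mat k n. \<forall>y\<in>carrier_mat k n. \<forall>z\<in>carrier_mat k n.
         h (x + y) z = h x z + h y z \<and> h z (x + y) = h z x + h z y) \<and>
     (\<forall>x\<in>carrier_mat k n. \<forall>y\<in>carrier_mat k n. \<forall>a\<in>carrier_mat n n. \<forall>b\<in>carrier_mat n n.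
         h (x * a) (y * b) = sigma bar a * h x y * b) \<and>
     (\<forall>x\<in>carrier_mat k n. \<forall>y\<in>carrier_mat k n. h y x = sigma bar (h x y)) \<and>
     (\<forall>g. A_linear n k g \<longrightarrow>
         (\<exists>!y. y \<in> carrier_mat k n \<and> (\<forall>x\<in>carrier_mat k n. g x = h y x))))"

definition rank :: "'d form \<Rightarrow> nat" where
  "rank f = fst f"

definition metabolic :: "('d::division_ring \<Rightarrow> 'd) \<Rightarrow> nat \<Rightarrow> 'd form \<Rightarrow> bool" where
  "metabolic bar n f \<longleftrightarrow> herm_form bar n f \<and> (case f of (k, h) \<Rightarrow>
     (\<exists>L. submodule n k L \<and> L = {y \<in> carrier_mat k n. \<forall>x\<in>L. h x y = 0\<^sub>m n n}))"

definition isometric :: "nat \<Rightarrow> 'd::division_ring form \<Rightarrow> 'd form \<Rightarrow> bool" where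
  "isometric n f g \<longleftrightarrow> (case f of (k1, h1) \<Rightarrow> case g of (k2, h2) \<Rightarrow>
     (\<exists>\<phi>. bij_betw \<phi> (carrier_mat k1 n) (carrier_mat k2 n) \<and>
        (\<forall>x\<in>carrier_mat k1 n. \<forall>y\<in>carrier_mat k1 n. \<phi> (x + y) = \<phi> x + \<phi> y) \<and>
        (\<forall>x\<in>carrier_mat k1 n. \<forall>a\<in>carrier_mat n n. \<phi> (x * a) = \<phi> x * a) \<and>
        (\<forall>x\<in>carrier_mat k1 n. \<forall>y\<in>carrier_mat k1 n. h2 (\<phi> x) (\<phi> y) = h1 x y)))"

definition top_rows :: "nat \<Rightarrow> nat \<Rightarrow> 'd mat \<Rightarrow> 'd mat" where
  "top_rows k1 n x = mat k1 n (\<lambda>(i,j). x $$ (i, j))"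

definition bottom_rows :: "nat \<Rightarrow> nat \<Rightarrow> nat \<Rightarrow> 'd mat \<Rightarrow> 'd mat" where
  "bottom_rows k1 k2 n x = mat k2 n (\<lambda>(i,j). x $$ (i + k1, j))"

definition osum :: "nat \<Rightarrow> 'd::division_ring form \<Rightarrow> 'd form \<Rightarrow> 'd form" where
  "osum n f g = (case f of (k1, h1) \<Rightarrow> case g of (k2, h2) \<Rightarrow>
     (k1 + k2, \<lambda>x y. h1 (top_rows k1 n x) (top_rows k1 n y)
                    + h2 (bottom_rows k1 k2 n x) (bottom_rows k1 k2 n y)))"

definition witt_equiv :: "('d::division_ring \<Rightarrow> 'd) \<Rightarrow> nat \<Rightarrow> 'd form \<Rightarrow> 'd form \<Rightarrow> bool" where
  "witt_equiv bar n f g \<longleftrightarrow> (\<exists>m1 m2. metabolic bar n m1 \<and> metabolic bar n m2 \<and>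
      isometric n (osum n f m1) (osum n g m2))"

(* [f] \<in> I(A,sigma): the Witt class of f is the class of a form of even rank *)
definition in_I :: "('d::division_ring \<Rightarrow> 'd) \<Rightarrow> nat \<Rightarrow> 'd form \<Rightarrow> bool" where
  "in_I bar n f \<longleftrightarrow> (\<exists>g. herm_form bar n g \<and> even (rank g) \<and> witt_equiv bar n f g)"

(* h_a(x,y) = xbar^t a y for row vectors x,y in D^n (1 x n matrices) *)
definition h_form :: "('d::division_ring \<Rightarrow> 'd) \<Rightarrow> nat \<Rightarrow> 'd \<Rightarrow> 'd form" where
  "h_form bar n a = (1, \<lambda>x y. mat n n (\<lambda>(i,j). bar (x $$ (0, i)) * a * y $$ (0, j)))"

fun form_of_exps :: "('d::division_ring \<Rightarrow> 'd) \<Rightarrow> nat \<Rightarrow> 'd \<Rightarrow> nat list \<Rightarrow> 'd form" where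
  "form_of_exps bar n a [] = (0, \<lambda>x y. 0\<^sub>m n n)"
| "form_of_exps bar n a [i] = h_form bar n (a ^ i)"
| "form_of_exps bar n a (i # is) = osum n (h_form bar n (a ^ i)) (form_of_exps bar n a is)"

definition family_F :: "('d::division_ring \<Rightarrow> 'd) \<Rightarrow> nat \<Rightarrow> 'd \<Rightarrow> 'd form set" where
  "family_F bar n a = {form_of_exps bar n a is | is. is \<noteq> []}"

definition box_exps :: "nat list \<Rightarrow> nat list \<Rightarrow> nat list" where
  "box_exps is js = concat (map (\<lambda>i. map (\<lambda>j. i + j) js) is)"

end

theory Submission
  imports Defs
begin



lemma mult_idx:
  assumes "A \<in> carrier_mat nr m" "B \<in> carrier_mat m nc" "i < nr" "j < nc"
  shows "(A * B) $$ (i,j) = (\<Sum>l<m. A $$ (i,l) * B $$ (l,j))"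
  using assms by (auto simp: scalar_prod_def lessThan_atLeast0)

locale invol =
  fixes bar :: "'d::division_ring \<Rightarrow> 'd"
  assumes add: "\<And>x y. bar (x + y) = bar x + bar y"
    and mul: "\<And>x y. bar (x * y) = bar y * bar x"
    and inv: "\<And>x. bar (bar x) = x"
begin

lemma zero[simp]: "bar 0 = 0"
  using add[of 0 0] by simp

lemma one[simp]: "bar 1 = 1"
proof -
  have "bar (bar 1 * 1) = bar 1 * bar (bar 1)" by (rule mul)
  hence "1 = bar 1 * 1" by (simp add: inv)
  thus ?thesis by simp
qed

lemma uminus[simp]: "bar (- x) = - bar x"
  by (metis add add.right_inverse neg_eq_iff_add_eq_0 zero)
lemma dummy: "True"
  using add[of x "-x"] by (simp add: eq_neg_iff_add_eq_0)

lemma sum: "bar (\<Sum>i\<in>I. f i) = (\<Sum>i\<in>I. bar (f i))"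
  by (induction I rule: infinite_finite_induct) (auto simp: add)

lemma sigma_idx[simp]: "i < dim_col A \<Longrightarrow> j < dim_row A \<Longrightarrow> sigma bar A $$ (i,j) = bar (A $$ (j,i))"
  unfolding sigma_def by (subst index_transpose_mat; auto)

lemma sigma_dims[simp]: "dim_row (sigma bar A) = dim_col A" "dim_col (sigma bar A) = dim_row A"
  unfolding sigma_def by auto

lemma sigma_carrier[simp]: "A \<in> carrier_mat n n \<Longrightarrow> sigma bar A \<in> carrier_mat n n"
  unfolding sigma_def carrier_mat_def by auto

lemma sigma_add: "A \<in> carrier_mat n n \<Longrightarrow> B \<in> carrier_mat n n \<Longrightarrow> sigma bar (A + B) = sigma bar A + sigma bar B"
  by (intro eq_matI) (auto simp: add)

lemma sigma_zero[simp]: "sigma bar (0\<^sub>m n n) = 0\<^sub>m n n"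
  by (intro eq_matI) auto

end

lemma invol_of: "F_involution Fs bar \<Longrightarrow> invol bar"
  unfolding F_involution_def invol_def by auto




definition canon :: "nat \<Rightarrow> (nat \<Rightarrow> 'd::zero) \<Rightarrow> bool" where
  "canon k v \<longleftrightarrow> (\<forall>r\<ge>k. v r = 0)"

definition lc :: "nat set \<Rightarrow> (nat \<Rightarrow> nat \<Rightarrow> 'd::semiring_0) \<Rightarrow> (nat \<Rightarrow> 'd) \<Rightarrow> nat \<Rightarrow> 'd" where
  "lc I W c = (\<lambda>r. \<Sum>i\<in>I. W i r * c i)"

definition indep :: "nat set \<Rightarrow> (nat \<Rightarrow> nat \<Rightarrow> 'd::semiring_0) \<Rightarrow> bool" where
  "indep I W \<longleftrightarrow> (\<forall>c. lc I W c = (\<lambda>r. 0) \<longrightarrow> (\<forall>i\<in>I. c i = 0))"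

lemma indep_bound:
  fixes W :: "nat \<Rightarrow> nat \<Rightarrow> 'd::division_ring"
  assumes "finite I" "\<forall>i\<in>I. canon k (W i)" "indep I W"
  shows "card I \<le> k"
  using assms
proof (induction k arbitrary: I W)
  case 0
  show ?case
  proof (cases "I = {}")
    case False
    then obtain i where i: "i \<in> I" by auto
    have "lc I W (\<lambda>_. 1) = (\<lambda>r. 0)"
      using "0.prems"(2) by (auto simp: lc_def canon_def)
    with "0.prems"(3) i have "(1::'d) = 0" unfolding indep_def by blast
    thus ?thesis by simp
  qed simp
next
  case (Suc k)
  show ?case
  proof (cases "\<forall>i\<in>I. W i k = 0")
    case True
    have "\<forall>i\<in>I. canon k (W i)"
      using Suc.prems(2) True unfolding canon_def
      by (metis le_eq_less_or_eq less_eq_Suc_le)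
    from Suc.IH[OF Suc.prems(1) this Suc.prems(3)] show ?thesis by simp
  next
    case False
    then obtain j where j: "j \<in> I" "W j k \<noteq> 0" by auto
    define t where "t i = inverse (W j k) * W i k" for i
    define W' where "W' i r = W i r - W j r * t i" for i r
    have can: "\<forall>i\<in>I - {j}. canon k (W' i)"
    proof (intro ballI, unfold canon_def, intro allI impI)
      fix i r assume i: "i \<in> I - {j}" and r: "k \<le> r"
      show "W' i r = 0"
      proof (cases "r = k")
        case True
        thus ?thesis using j(2) by (simp add: W'_def t_def mult.assoc[symmetric])
      next
        case False
        hence "Suc k \<le> r" using r by simp
        thus ?thesis using Suc.prems(2) i j unfolding W'_def canon_def by auto
      qed
    qed
    have ind: "indep (I - {j}) W'"
      unfolding indep_def
    proof (intro allI impI)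
      fix c' assume h: "lc (I - {j}) W' c' = (\<lambda>r. 0)"
      define c where "c = c'(j := - (\<Sum>i\<in>I - {j}. t i * c' i))"
      have "lc I W c = (\<lambda>r. 0)"
      proof
        fix r
        have fin: "finite (I - {j})" using Suc.prems(1) by simp
        have "0 = (\<Sum>i\<in>I - {j}. W' i r * c' i)" using fun_cong[OF h, of r] by (simp add: lc_def)
        also have "\<dots> = (\<Sum>i\<in>I - {j}. W i r * c' i) - W j r * (\<Sum>i\<in>I - {j}. t i * c' i)"
          by (simp add: W'_def algebra_simps sum_subtractf sum_distrib_left)
        finally have e: "(\<Sum>i\<in>I - {j}. W i r * c' i) = W j r * (\<Sum>i\<in>I - {j}. t i * c' i)"
          by (simp add: eq_neg_iff_add_eq_0)
        have "lc I W c r = W j r * c j + (\<Sum>i\<in>I - {j}. W i r * c i)"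
          unfolding lc_def using Suc.prems(1) j(1) by (simp add: sum.remove)
        also have "(\<Sum>i\<in>I - {j}. W i r * c i) = (\<Sum>i\<in>I - {j}. W i r * c' i)"
          by (rule sum.cong) (auto simp: c_def)
        also have "W j r * c j = - (W j r * (\<Sum>i\<in>I - {j}. t i * c' i))"
          by (simp add: c_def)
        finally show "lc I W c r = 0" using e by simp
      qed
      hence "\<forall>i\<in>I. c i = 0" using Suc.prems(3) unfolding indep_def by blast
      thus "\<forall>i\<in>I - {j}. c' i = 0" unfolding c_def by (metis DiffE fun_upd_other singletonI)
    qed
    have "card (I - {j}) \<le> k"
      using Suc.IH[of "I - {j}" W'] Suc.prems(1) can ind by simp
    thus ?thesis using j(1) Suc.prems(1)
      by (metis Suc_le_mono card.remove)
  qed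
qed

lemma lc_empty[simp]: "lc {} W c = (\<lambda>r. 0)"
  by (simp add: lc_def)

lemma lc_insert: "finite I \<Longrightarrow> i \<notin> I \<Longrightarrow> lc (insert i I) W c = (\<lambda>r. lc I W c r + W i r * c i)"
  by (simp add: lc_def add.commute)

lemma canon_lc: "\<forall>i\<in>I. canon k (W i) \<Longrightarrow> canon k (lc I W c)"
  by (simp add: canon_def lc_def)

lemma lc_cong: "(\<And>i. i \<in> I \<Longrightarrow> W i = W' i) \<Longrightarrow> (\<And>i. i \<in> I \<Longrightarrow> c i = c' i) \<Longrightarrow> lc I W c = lc I W' c'"
  unfolding lc_def by (intro ext sum.cong) auto

lemma extend_indep:
  fixes W :: "nat \<Rightarrow> nat \<Rightarrow> 'd::division_ring"
  assumes "indep {..<m} W" "\<not> (\<exists>c. v = lc {..<m} W c)"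
  shows "indep {..<Suc m} (W(m := v))"
  unfolding indep_def
proof (intro allI impI)
  fix c assume h: "lc {..<Suc m} (W(m := v)) c = (\<lambda>r. 0)"
  have e: "lc {..<Suc m} (W(m := v)) c = (\<lambda>r. lc {..<m} W c r + v r * c m)"
  proof -
    have "lc {..<m} (W(m := v)) c = lc {..<m} W c" by (rule lc_cong) auto
    thus ?thesis unfolding lessThan_Suc by (subst lc_insert) auto
  qed
  have cm: "c m = 0"
  proof (rule ccontr)
    assume cm: "c m \<noteq> 0"
    have "v = lc {..<m} W (\<lambda>i. - (c i * inverse (c m)))"
    proof
      fix r
      have "lc {..<m} W c r + v r * c m = 0" using h e by metis
      hence "v r * c m = - lc {..<m} W c r" by (simp add: eq_neg_iff_add_eq_0 add.commute)
      hence "v r = - lc {..<m} W c r * inverse (c m)" using cm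
        by (metis mult.assoc right_inverse mult_1_right)
      also have "\<dots> = lc {..<m} W (\<lambda>i. - (c i * inverse (c m))) r"
        by (simp add: lc_def sum_distrib_right mult.assoc sum_negf)
      finally show "v r = lc {..<m} W (\<lambda>i. - (c i * inverse (c m))) r" .
    qed
    thus False using assms(2) by blast
  qed
  have "lc {..<m} W c = (\<lambda>r. 0)"
  proof
    fix r show "lc {..<m} W c r = 0" using fun_cong[OF h, of r] e cm by (metis add_0_right mult_zero_right)
  qed
  hence "\<forall>i<m. c i = 0" using assms(1) unfolding indep_def by blast
  thus "\<forall>i\<in>{..<Suc m}. c i = 0" using cm by (auto simp: less_Suc_eq)
qed

lemma exists_step: "P (0::nat) \<Longrightarrow> \<not> P N \<Longrightarrow> \<exists>r. P r \<and> \<not> P (Suc r)"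
  by (induction N) auto

lemma max_family:
  fixes U0 :: "nat \<Rightarrow> nat \<Rightarrow> 'd::division_ring"
  assumes S: "\<forall>v\<in>S. canon k v" and U0: "\<forall>i<m0. U0 i \<in> S" "indep {..<m0} U0"
  shows "\<exists>r W. (\<forall>i<m0. W i = U0 i) \<and> (\<forall>i<m0+r. W i \<in> S) \<and> indep {..<m0+r} W \<and>
            (\<forall>v\<in>S. \<exists>c. v = lc {..<m0+r} W c)"
proof -
  define P where "P r \<longleftrightarrow> (\<exists>W. (\<forall>i<m0. W i = U0 i) \<and> (\<forall>i<m0+r. W i \<in> S) \<and> indep {..<m0+r} W)" for r
  have P0: "P 0" unfolding P_def using U0 by auto
  have PN: "\<not> P (Suc k)"
  proof
    assume "P (Suc k)"
    then obtain W where W: "\<forall>i<m0 + Suc k. W i \<in> S" "indep {..<m0+Suc k} W" unfolding P_def by blast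
    have "card {..<m0 + Suc k} \<le> k" using W S by (intro indep_bound) auto
    thus False by simp
  qed
  obtain r where r: "P r" "\<not> P (Suc r)" using exists_step[of P, OF P0 PN] by blast
  then obtain W where W: "\<forall>i<m0. W i = U0 i" "\<forall>i<m0+r. W i \<in> S" "indep {..<m0+r} W" unfolding P_def by blast
  have "\<forall>v\<in>S. \<exists>c. v = lc {..<m0+r} W c"
  proof (rule ccontr)
    assume "\<not> ?thesis"
    then obtain v where v: "v \<in> S" "\<not> (\<exists>c. v = lc {..<m0+r} W c)" by blast
    have "P (Suc r)" unfolding P_def
      apply (rule exI[of _ "W(m0+r := v)"])
      using W v extend_indep[OF W(3) v(2)] by (auto simp: less_Suc_eq)
    thus False using r by simp
  qed
  thus ?thesis using W by blast
qed




definition colv :: "nat \<Rightarrow> 'd::zero mat \<Rightarrow> nat \<Rightarrow> 'd" where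
  "colv j x = (\<lambda>r. if r < dim_row x then x $$ (r,j) else 0)"

definition colmat :: "nat \<Rightarrow> nat \<Rightarrow> (nat \<Rightarrow> 'd::zero) \<Rightarrow> 'd mat" where
  "colmat k n v = mat k n (\<lambda>(r,j). if j = 0 then v r else 0)"

definition Sm :: "nat \<Rightarrow> 'd::zero \<Rightarrow> 'd mat" where
  "Sm n d = mat n n (\<lambda>(i,j). if i = 0 \<and> j = 0 then d else 0)"

definition Eij :: "nat \<Rightarrow> nat \<Rightarrow> nat \<Rightarrow> 'd::{zero,one} mat" where
  "Eij n i j = mat n n (\<lambda>(l,m). if l = i \<and> m = j then 1 else 0)"

lemma dims_aux[simp]: "dim_row (colmat k n v) = k" "dim_col (colmat k n v) = n"
  "dim_row (Sm n d) = n" "dim_col (Sm n d) = n" "dim_row (Eij n i j) = n" "dim_col (Eij n i j) = n"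
  by (auto simp: colmat_def Sm_def Eij_def)

lemma colmat_carrier[simp]: "colmat k n v \<in> carrier_mat k n"
  by (simp add: colmat_def)
lemma Sm_carrier[simp]: "Sm n d \<in> carrier_mat n n"
  by (simp add: Sm_def)
lemma Eij_carrier[simp]: "Eij n i j \<in> carrier_mat n n"
  by (simp add: Eij_def)

lemma sum_single:
  fixes f :: "nat \<Rightarrow> 'd::comm_monoid_add"
  assumes "i0 < n" "\<And>l. l < n \<Longrightarrow> l \<noteq> i0 \<Longrightarrow> f l = 0"
  shows "(\<Sum>l<n. f l) = f i0"
proof -
  have "(\<Sum>l<n. f l) = f i0 + (\<Sum>l\<in>{..<n} - {i0}. f l)"
    using assms(1) by (simp add: sum.remove)
  also have "(\<Sum>l\<in>{..<n} - {i0}. f l) = 0" using assms(2) by (intro sum.neutral) auto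
  finally show ?thesis by simp
qed

lemma colmat_add: "colmat k n (\<lambda>r. v r + w r) = colmat k n v + colmat k n (w :: nat \<Rightarrow> 'd::monoid_add)"
  by (intro eq_matI) (auto simp: colmat_def)

lemma colmat_zero: "colmat k n (\<lambda>r. 0) = 0\<^sub>m k n"
  by (intro eq_matI) (auto simp: colmat_def)

lemma colmat_scale:
  fixes v :: "nat \<Rightarrow> 'd::semiring_0"
  assumes "0 < n"
  shows "colmat k n (\<lambda>r. v r * d) = colmat k n v * Sm n d"
proof (intro eq_matI)
  fix i j assume ij: "i < dim_row (colmat k n v * Sm n d)" "j < dim_col (colmat k n v * Sm n d)"
  hence ij': "i < k" "j < n" by auto
  have "(colmat k n v * Sm n d) $$ (i,j) = (\<Sum>l<n. colmat k n v $$ (i,l) * Sm n d $$ (l,j))"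
    using ij' by (intro mult_idx) auto
  also have "\<dots> = colmat k n v $$ (i,0) * Sm n d $$ (0,j)"
    using assms ij' by (intro sum_single) (auto simp: colmat_def)
  finally show "colmat k n (\<lambda>r. v r * d) $$ (i, j) = (colmat k n v * Sm n d) $$ (i, j)"
    using ij' assms by (auto simp: colmat_def Sm_def)
qed auto

lemma colv_colmat: "canon k v \<Longrightarrow> 0 < n \<Longrightarrow> colv 0 (colmat k n v) = v"
  by (auto simp: colv_def colmat_def canon_def fun_eq_iff)

lemma canon_colv: "x \<in> carrier_mat k n \<Longrightarrow> canon k (colv j x)"
  by (auto simp: colv_def canon_def)

lemma colmat_eq_zero: "canon k v \<Longrightarrow> 0 < n \<Longrightarrow> colmat k n v = 0\<^sub>m k n \<Longrightarrow> v = (\<lambda>r. 0)"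
  by (metis colmat_zero colv_colmat canon_def)

lemma mult_Eij0:
  fixes x :: "'d::semiring_1 mat"
  assumes x: "x \<in> carrier_mat k n" and i: "i < n"
  shows "x * Eij n i 0 = colmat k n (colv i x)"
proof (intro eq_matI)
  fix r j assume rj: "r < dim_row (colmat k n (colv i x))" "j < dim_col (colmat k n (colv i x))"
  hence rj': "r < k" "j < n" by (auto simp: colmat_def)
  have "(x * Eij n i 0) $$ (r,j) = (\<Sum>l<n. x $$ (r,l) * Eij n i 0 $$ (l,j))"
    using rj' x by (intro mult_idx[of _ k n]) auto
  also have "\<dots> = x $$ (r,i) * Eij n i 0 $$ (i,j)"
    using i rj' by (intro sum_single) (auto simp: Eij_def)
  finally show "(x * Eij n i 0) $$ (r,j) = colmat k n (colv i x) $$ (r,j)"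
    using rj' i x by (auto simp: colmat_def Eij_def colv_def)
qed (use x in auto)

lemma mult_E00_idx:
  fixes M :: "'d::semiring_1 mat"
  assumes "M \<in> carrier_mat m n" "i < m" "j < n"
  shows "(M * Eij n 0 0) $$ (i,j) = (if j = 0 then M $$ (i,0) else 0)"
proof -
  have "(M * Eij n 0 0) $$ (i,j) = (\<Sum>l<n. M $$ (i,l) * Eij n 0 0 $$ (l,j))"
    using assms by (intro mult_idx[of _ _ n]) auto
  also have "\<dots> = M $$ (i,0) * Eij n 0 0 $$ (0,j)"
    using assms by (intro sum_single) (auto simp: Eij_def)
  finally show ?thesis using assms by (auto simp: Eij_def)
qed

lemma Sm_left_00:
  fixes M :: "'d::semiring_0 mat"
  assumes "M \<in> carrier_mat n n" "0 < n"
  shows "(Sm n d * M) $$ (0,0) = d * M $$ (0,0)"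
proof -
  have "(Sm n d * M) $$ (0,0) = (\<Sum>l<n. Sm n d $$ (0,l) * M $$ (l,0))"
    using assms by (intro mult_idx[of _ _ n]) auto
  also have "\<dots> = Sm n d $$ (0,0) * M $$ (0,0)"
    using assms by (intro sum_single) (auto simp: Sm_def)
  finally show ?thesis using assms by (auto simp: Sm_def)
qed

lemma Eij_left_00:
  fixes M :: "'d::semiring_1 mat"
  assumes "M \<in> carrier_mat n n" "i < n"
  shows "(Eij n 0 i * M) $$ (0,0) = M $$ (i,0)"
proof -
  have "(Eij n 0 i * M) $$ (0,0) = (\<Sum>l<n. Eij n 0 i $$ (0,l) * M $$ (l,0))"
    using assms by (intro mult_idx[of _ _ n]) auto
  also have "\<dots> = Eij n 0 i $$ (0,i) * M $$ (i,0)"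
    using assms by (intro sum_single) (auto simp: Eij_def)
  finally show ?thesis using assms by (auto simp: Eij_def)
qed

context invol begin

lemma sigma_Sm: "sigma bar (Sm n d) = Sm n (bar d)"
  by (intro eq_matI) (auto simp: Sm_def)

lemma sigma_Eij: "sigma bar (Eij n i j) = Eij n j i"
  by (intro eq_matI) (auto simp: Eij_def)

end




lemma lin_lc:
  fixes \<psi> :: "(nat \<Rightarrow> 'd::division_ring) \<Rightarrow> nat \<Rightarrow> 'd"
  assumes add: "\<And>v w. canon k v \<Longrightarrow> canon k w \<Longrightarrow> \<psi> (\<lambda>r. v r + w r) = (\<lambda>r. \<psi> v r + \<psi> w r)"
    and scale: "\<And>v d. canon k v \<Longrightarrow> \<psi> (\<lambda>r. v r * d) = (\<lambda>r. \<psi> v r * d)"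
    and fin: "finite I" and can: "\<forall>i\<in>I. canon k (W i)"
  shows "\<psi> (lc I W c) = lc I (\<lambda>i. \<psi> (W i)) c"
  using fin can
proof (induction I rule: finite_induct)
  case empty
  have "\<psi> (\<lambda>r. (\<lambda>r. 0) r * 0) = (\<lambda>r. \<psi> (\<lambda>r. 0) r * 0)" by (rule scale) (simp add: canon_def)
  thus ?case by simp
next
  case (insert i I)
  have c1: "canon k (lc I W c)" using insert by (intro canon_lc) auto
  have c2: "canon k (\<lambda>r. W i r * c i)" using insert by (auto simp: canon_def)
  have "\<psi> (lc (insert i I) W c) = \<psi> (\<lambda>r. lc I W c r + W i r * c i)"
    using insert by (simp add: lc_insert)
  also have "\<dots> = (\<lambda>r. \<psi> (lc I W c) r + \<psi> (\<lambda>r. W i r * c i) r)" by (rule add[OF c1 c2])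
  also have "\<psi> (\<lambda>r. W i r * c i) = (\<lambda>r. \<psi> (W i) r * c i)" using insert by (intro scale) auto
  also have "\<psi> (lc I W c) = lc I (\<lambda>i. \<psi> (W i)) c" using insert by auto
  finally show ?case using insert by (simp add: lc_insert)
qed

lemma colv_add: "(x :: 'd::monoid_add mat) \<in> carrier_mat k n \<Longrightarrow> y \<in> carrier_mat k n \<Longrightarrow> j < n \<Longrightarrow> colv j (x + y) = (\<lambda>r. colv j x r + colv j y r)"
  by (auto simp: colv_def fun_eq_iff)

lemma colv_Sm:
  fixes M :: "'d::semiring_0 mat"
  assumes "M \<in> carrier_mat k n" "0 < n"
  shows "colv 0 (M * Sm n d) = (\<lambda>r. colv 0 M r * d)"
proof
  fix r
  show "colv 0 (M * Sm n d) r = colv 0 M r * d"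
  proof (cases "r < k")
    case True
    have "(M * Sm n d) $$ (r,0) = (\<Sum>l<n. M $$ (r,l) * Sm n d $$ (l,0))"
      using assms True by (intro mult_idx[of _ k n]) auto
    also have "\<dots> = M $$ (r,0) * Sm n d $$ (0,0)"
      using assms by (intro sum_single) (auto simp: Sm_def)
    finally show ?thesis using assms True by (auto simp: colv_def Sm_def)
  qed (use assms in \<open>auto simp: colv_def\<close>)
qed

lemma mat_self_add: "(A :: 'a::group_add mat) \<in> carrier_mat m n \<Longrightarrow> A + A = A \<Longrightarrow> A = 0\<^sub>m m n"
proof (intro eq_matI)
  fix i j assume "A + A = A" "A \<in> carrier_mat m n" "i < dim_row (0\<^sub>m m n :: 'a mat)" "j < dim_col (0\<^sub>m m n :: 'a mat)"
  hence "A $$ (i,j) + A $$ (i,j) = A $$ (i,j)" by (metis carrier_matD index_add_mat(1) index_zero_mat(2,3))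
  hence "A $$ (i,j) = 0" by (metis add.left_neutral add_right_cancel)
  thus "A $$ (i,j) = 0\<^sub>m m n $$ (i,j)" using \<open>i < _\<close> \<open>j < _\<close> by simp
qed auto

definition linmap :: "nat \<Rightarrow> nat \<Rightarrow> nat \<Rightarrow> ('d::semiring_0 mat \<Rightarrow> 'd mat) \<Rightarrow> bool" where
  "linmap n k1 k2 \<phi> \<longleftrightarrow> bij_betw \<phi> (carrier_mat k1 n) (carrier_mat k2 n) \<and>
        (\<forall>x\<in>carrier_mat k1 n. \<forall>y\<in>carrier_mat k1 n. \<phi> (x + y) = \<phi> x + \<phi> y) \<and>
        (\<forall>x\<in>carrier_mat k1 n. \<forall>a\<in>carrier_mat n n. \<phi> (x * a) = \<phi> x * a)"

lemma linmap_le: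
  fixes \<phi> :: "'d::division_ring mat \<Rightarrow> 'd mat"
  assumes "linmap n k1 k2 \<phi>" and n: "0 < n"
  shows "k1 \<le> k2"
proof -
  have bij: "bij_betw \<phi> (carrier_mat k1 n) (carrier_mat k2 n)"
   and ad: "\<And>x y. x\<in>carrier_mat k1 n \<Longrightarrow> y\<in>carrier_mat k1 n \<Longrightarrow> \<phi> (x + y) = \<phi> x + \<phi> y"
   and ml: "\<And>x a. x\<in>carrier_mat k1 n \<Longrightarrow> a\<in>carrier_mat n n \<Longrightarrow> \<phi> (x * a) = \<phi> x * a"
    using assms unfolding linmap_def by auto
  have car: "\<And>x. x \<in> carrier_mat k1 n \<Longrightarrow> \<phi> x \<in> carrier_mat k2 n"
    by (rule bij_betw_apply[OF bij])
  define \<psi> where "\<psi> v = colv 0 (\<phi> (colmat k1 n v))" for v :: "nat \<Rightarrow> 'd"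
  have padd: "\<psi> (\<lambda>r. v r + w r) = (\<lambda>r. \<psi> v r + \<psi> w r)" for v w
    unfolding \<psi>_def colmat_add
    using ad[of "colmat k1 n v" "colmat k1 n w"] colv_add[OF car[OF colmat_carrier] car[OF colmat_carrier] n] by simp
  have pscale: "\<psi> (\<lambda>r. v r * d) = (\<lambda>r. \<psi> v r * d)" for v d
    unfolding \<psi>_def colmat_scale[OF n]
    using ml[of "colmat k1 n v" "Sm n d"] colv_Sm[OF car[OF colmat_carrier] n] by simp
  define e where "e i = (\<lambda>r::nat. if r = i then (1::'d) else 0)" for i :: nat
  have ecan: "\<forall>i\<in>{..<k1}. canon k1 (e i)" by (auto simp: e_def canon_def)
  have "indep {..<k1} (\<lambda>i. \<psi> (e i))"
    unfolding indep_def
  proof (intro allI impI)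
    fix c assume h: "lc {..<k1} (\<lambda>i. \<psi> (e i)) c = (\<lambda>r. 0)"
    define z where "z = lc {..<k1} e c"
    have zc: "canon k1 z" unfolding z_def using ecan by (rule canon_lc)
    have zr: "z r = c r" if "r < k1" for r
    proof -
      have "z r = (\<Sum>i<k1. e i r * c i)" by (simp add: z_def lc_def)
      also have "\<dots> = e r r * c r" using that by (intro sum_single) (auto simp: e_def)
      finally show ?thesis by (simp add: e_def)
    qed
    have pz: "\<psi> z = (\<lambda>r. 0)"
      unfolding z_def using lin_lc[of k1 \<psi>, OF padd pscale _ ecan] h by simp
    have cz: "colmat k1 n z \<in> carrier_mat k1 n" by simp
    have "\<phi> (colmat k1 n z) = \<phi> (colmat k1 n z * Eij n 0 0)"
      using mult_Eij0[OF cz n] colv_colmat[OF zc n] by simp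
    also have "\<dots> = \<phi> (colmat k1 n z) * Eij n 0 0" using ml cz by simp
    also have "\<dots> = 0\<^sub>m k2 n"
    proof (intro eq_matI)
      fix i j assume ij: "i < dim_row (0\<^sub>m k2 n :: 'd mat)" "j < dim_col (0\<^sub>m k2 n :: 'd mat)"
      have "colv 0 (\<phi> (colmat k1 n z)) i = 0" using pz by (simp add: \<psi>_def)
      thus "(\<phi> (colmat k1 n z) * Eij n 0 0) $$ (i,j) = 0\<^sub>m k2 n $$ (i,j)"
        using ij car[OF cz] by (subst mult_E00_idx[of _ k2]) (auto simp: colv_def)
    qed (use car[OF cz] in auto)
    finally have p0: "\<phi> (colmat k1 n z) = 0\<^sub>m k2 n" .
    have "\<phi> (0\<^sub>m k1 n) = \<phi> (0\<^sub>m k1 n) + \<phi> (0\<^sub>m k1 n)" using ad[of "0\<^sub>m k1 n" "0\<^sub>m k1 n"] by simp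
    hence "\<phi> (0\<^sub>m k1 n) = 0\<^sub>m k2 n" using mat_self_add[OF car[of "0\<^sub>m k1 n"]] by simp
    hence "\<phi> (colmat k1 n z) = \<phi> (0\<^sub>m k1 n)" using p0 by simp
    moreover have "inj_on \<phi> (carrier_mat k1 n)" using bij by (simp add: bij_betw_def)
    ultimately have "colmat k1 n z = 0\<^sub>m k1 n" using cz by (meson inj_onD zero_carrier_mat)
    hence "z = (\<lambda>r. 0)" using colmat_eq_zero zc n by blast
    thus "\<forall>i\<in>{..<k1}. c i = 0" using zr by (metis lessThan_iff)
  qed
  moreover have "\<forall>i\<in>{..<k1}. canon k2 (\<psi> (e i))"
    unfolding \<psi>_def using canon_colv[OF car[OF colmat_carrier]] by blast
  ultimately have "card {..<k1} \<le> k2" by (intro indep_bound) auto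
  thus ?thesis by simp
qed

lemma linmap_inv:
  fixes \<phi> :: "'d::division_ring mat \<Rightarrow> 'd mat"
  assumes "linmap n k1 k2 \<phi>"
  shows "linmap n k2 k1 (inv_into (carrier_mat k1 n) \<phi>)"
proof -
  let ?C1 = "carrier_mat k1 n :: 'd mat set" and ?C2 = "carrier_mat k2 n :: 'd mat set"
  let ?\<chi> = "inv_into ?C1 \<phi>"
  have bij: "bij_betw \<phi> ?C1 ?C2"
   and ad: "\<And>x y. x\<in>?C1 \<Longrightarrow> y\<in>?C1 \<Longrightarrow> \<phi> (x + y) = \<phi> x + \<phi> y"
   and ml: "\<And>x a. x\<in>?C1 \<Longrightarrow> a\<in>carrier_mat n n \<Longrightarrow> \<phi> (x * a) = \<phi> x * a"
    using assms unfolding linmap_def by auto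
  have bij2: "bij_betw ?\<chi> ?C2 ?C1" by (rule bij_betw_inv_into[OF bij])
  have inC1: "x \<in> ?C2 \<Longrightarrow> ?\<chi> x \<in> ?C1" for x by (rule bij_betw_apply[OF bij2])
  have fi: "x \<in> ?C2 \<Longrightarrow> \<phi> (?\<chi> x) = x" for x using bij by (meson bij_betw_inv_into_right)
  have if_: "x \<in> ?C1 \<Longrightarrow> ?\<chi> (\<phi> x) = x" for x using bij by (meson bij_betw_inv_into_left)
  have "?\<chi> (x + y) = ?\<chi> x + ?\<chi> y" if "x \<in> ?C2" "y \<in> ?C2" for x y
  proof -
    have "\<phi> (?\<chi> x + ?\<chi> y) = x + y" using ad inC1 fi that by simp
    hence "?\<chi> (x + y) = ?\<chi> (\<phi> (?\<chi> x + ?\<chi> y))" by simp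
    also have "\<dots> = ?\<chi> x + ?\<chi> y" using if_ inC1 that by simp
    finally show ?thesis .
  qed
  moreover have "?\<chi> (x * a) = ?\<chi> x * a" if "x \<in> ?C2" "a \<in> carrier_mat n n" for x a
  proof -
    have "\<phi> (?\<chi> x * a) = x * a" using ml inC1 fi that by simp
    hence "?\<chi> (x * a) = ?\<chi> (\<phi> (?\<chi> x * a))" by simp
    also have "\<dots> = ?\<chi> x * a" by (rule if_) (rule mult_carrier_mat[OF inC1[OF that(1)] that(2)])
    finally show ?thesis .
  qed
  ultimately show ?thesis using bij2 unfolding linmap_def by blast
qed

lemma isometric_rank:
  fixes f g :: "'d::division_ring form"
  assumes "isometric n f g" "0 < n"
  shows "rank f = rank g"
proof -
  obtain k1 h1 k2 h2 where fg: "f = (k1,h1)" "g = (k2,h2)" by (cases f, cases g)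
  obtain \<phi> :: "'d mat \<Rightarrow> 'd mat" where p: "bij_betw \<phi> (carrier_mat k1 n) (carrier_mat k2 n)"
     "\<forall>x\<in>carrier_mat k1 n. \<forall>y\<in>carrier_mat k1 n. \<phi> (x + y) = \<phi> x + \<phi> y"
     "\<forall>x\<in>carrier_mat k1 n. \<forall>a\<in>carrier_mat n n. \<phi> (x * a) = \<phi> x * a"
    using assms(1) by (auto simp: fg isometric_def)
  hence "linmap n k1 k2 \<phi>" unfolding linmap_def by blast
  hence "k1 \<le> k2" "k2 \<le> k1" using linmap_le linmap_inv assms(2) by blast+
  thus ?thesis by (simp add: fg rank_def)
qed




context invol begin
lemma sigma_one: "sigma bar (1\<^sub>m n) = 1\<^sub>m n"
  by (intro eq_matI) auto
end

locale hform = invol bar for bar :: "'d::division_ring \<Rightarrow> 'd" +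
  fixes n k :: nat and h :: "'d mat \<Rightarrow> 'd mat \<Rightarrow> 'd mat"
  assumes herm: "herm_form bar n (k,h)" and npos: "0 < n"
begin

abbreviation "C \<equiv> carrier_mat k n :: 'd mat set"

lemma herm':
  "(\<forall>x\<in>C. \<forall>y\<in>C. h x y \<in> carrier_mat n n) \<and>
     (\<forall>x\<in>C. \<forall>y\<in>C. \<forall>z\<in>C.
         h (x + y) z = h x z + h y z \<and> h z (x + y) = h z x + h z y) \<and>
     (\<forall>x\<in>C. \<forall>y\<in>C. \<forall>a\<in>carrier_mat n n. \<forall>b\<in>carrier_mat n n.
         h (x * a) (y * b) = sigma bar a * h x y * b) \<and>
     (\<forall>x\<in>C. \<forall>y\<in>C. h y x = sigma bar (h x y)) \<and>
     (\<forall>g. A_linear n k g \<longrightarrow>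
         (\<exists>!y. y \<in> C \<and> (\<forall>x\<in>C. g x = h y x)))"
  using herm unfolding herm_form_def by (simp only: prod.case)

lemma hc: "x \<in> C \<Longrightarrow> y \<in> C \<Longrightarrow> h x y \<in> carrier_mat n n"
  using herm'[THEN conjunct1] by blast
lemma hadd1: "x \<in> C \<Longrightarrow> y \<in> C \<Longrightarrow> z \<in> C \<Longrightarrow> h (x + y) z = h x z + h y z"
  using herm'[THEN conjunct2, THEN conjunct1] by blast
lemma hadd2: "x \<in> C \<Longrightarrow> y \<in> C \<Longrightarrow> z \<in> C \<Longrightarrow> h z (x + y) = h z x + h z y"
  using herm'[THEN conjunct2, THEN conjunct1] by blast
lemma hsesq: "x \<in> C \<Longrightarrow> y \<in> C \<Longrightarrow> a \<in> carrier_mat n n \<Longrightarrow> b \<in> carrier_mat n n \<Longrightarrow>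
   h (x * a) (y * b) = sigma bar a * h x y * b"
  using herm'[THEN conjunct2, THEN conjunct2, THEN conjunct1] by blast
lemma hherm: "x \<in> C \<Longrightarrow> y \<in> C \<Longrightarrow> h y x = sigma bar (h x y)"
  using herm'[THEN conjunct2, THEN conjunct2, THEN conjunct2, THEN conjunct1] by blast
lemma nonsing: "A_linear n k g \<Longrightarrow> \<exists>y. y \<in> C \<and> (\<forall>x\<in>C. g x = h y x)"
  using herm'[THEN conjunct2, THEN conjunct2, THEN conjunct2, THEN conjunct2] by metis

lemma hr: "x \<in> C \<Longrightarrow> y \<in> C \<Longrightarrow> b \<in> carrier_mat n n \<Longrightarrow> h x (y * b) = h x y * b"
  using hsesq[of x y "1\<^sub>m n" b] hc[of x y] by (simp add: sigma_one right_mult_one_mat left_mult_one_mat)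

lemma hl: "x \<in> C \<Longrightarrow> y \<in> C \<Longrightarrow> a \<in> carrier_mat n n \<Longrightarrow> h (x * a) y = sigma bar a * h x y"
  using hsesq[of x y a "1\<^sub>m n"] hc[of x y]
  by (simp add: right_mult_one_mat)

definition b :: "(nat \<Rightarrow> 'd) \<Rightarrow> (nat \<Rightarrow> 'd) \<Rightarrow> 'd" where
  "b u v = h (colmat k n u) (colmat k n v) $$ (0,0)"

lemma b_add2: "b u (\<lambda>r. v r + w r) = b u v + b u w"
  unfolding b_def colmat_add using hadd2[of "colmat k n v" "colmat k n w" "colmat k n u"]
    hc[of "colmat k n u" "colmat k n w"] npos by simp

lemma b_scale2: "b u (\<lambda>r. v r * d) = b u v * d"
proof -
  have "h (colmat k n u) (colmat k n (\<lambda>r. v r * d)) = h (colmat k n u) (colmat k n v) * Sm n d"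
    unfolding colmat_scale[OF npos] by (rule hr) auto
  moreover have "colv 0 (h (colmat k n u) (colmat k n v) * Sm n d) 0 = colv 0 (h (colmat k n u) (colmat k n v)) 0 * d"
    using colv_Sm[OF hc npos] by simp
  ultimately show ?thesis unfolding b_def using hc[of "colmat k n u" "colmat k n v"] npos by (simp add: colv_def)
qed

lemma b_herm: "b v u = bar (b u v)"
  unfolding b_def using hherm[of "colmat k n u" "colmat k n v"] hc[of "colmat k n u" "colmat k n v"] npos by simp

lemma b_lc2: "finite I \<Longrightarrow> \<forall>i\<in>I. canon k (W i) \<Longrightarrow> b u (lc I W c) = (\<Sum>i\<in>I. b u (W i) * c i)"
  using lin_lc[of k "\<lambda>v r. b u v" I W c] b_add2 b_scale2 by (simp add: lc_def fun_eq_iff)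

lemma b_lc1: "finite I \<Longrightarrow> \<forall>i\<in>I. canon k (W i) \<Longrightarrow> b (lc I W c) v = (\<Sum>i\<in>I. bar (c i) * b (W i) v)"
  by (simp add: b_herm[of _ v] b_lc2 sum mul)

end

locale meta = hform bar n k h for bar :: "'d::division_ring \<Rightarrow> 'd" and n k h +
  fixes L :: "'d::division_ring mat set"
  assumes subm: "submodule n k L" and lag: "L = {y \<in> carrier_mat k n. \<forall>x\<in>L. h x y = 0\<^sub>m n n}"
begin

definition L0 :: "(nat \<Rightarrow> 'd) set" where "L0 = {v. canon k v \<and> colmat k n v \<in> L}"

lemma L_sub: "L \<subseteq> C" using subm unfolding submodule_def by auto
lemma L_add: "x \<in> L \<Longrightarrow> y \<in> L \<Longrightarrow> x + y \<in> L" using subm unfolding submodule_def by auto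
lemma L_mult: "x \<in> L \<Longrightarrow> a \<in> carrier_mat n n \<Longrightarrow> x * a \<in> L" using subm unfolding submodule_def by auto
lemma L_zero: "0\<^sub>m k n \<in> L" using subm unfolding submodule_def by auto

lemma L_orth: "x \<in> L \<Longrightarrow> y \<in> L \<Longrightarrow> h x y = 0\<^sub>m n n"
  using lag by blast

lemma lc_L0: "finite I \<Longrightarrow> \<forall>i\<in>I. W i \<in> L0 \<Longrightarrow> lc I W c \<in> L0"
proof (induction I rule: finite_induct)
  case empty
  thus ?case by (simp add: L0_def canon_def colmat_zero L_zero)
next
  case (insert i I)
  have "lc I W c \<in> L0" "W i \<in> L0" using insert by auto
  hence "colmat k n (\<lambda>r. lc I W c r + W i r * c i) \<in> L"
    unfolding colmat_add colmat_scale[OF npos] L0_def by (auto intro!: L_add L_mult)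
  moreover have "canon k (\<lambda>r. lc I W c r + W i r * c i)"
    using \<open>lc I W c \<in> L0\<close> \<open>W i \<in> L0\<close> by (auto simp: L0_def canon_def)
  ultimately show ?case using insert by (simp add: lc_insert L0_def)
qed

lemma L0_orth: "v \<in> L0 \<Longrightarrow> w \<in> L0 \<Longrightarrow> b v w = 0"
  unfolding L0_def b_def using L_orth npos by auto

lemma L0_perp:
  assumes w: "canon k w" and perp: "\<forall>v\<in>L0. b v w = 0"
  shows "w \<in> L0"
proof -
  let ?cw = "colmat k n w"
  have cw: "?cw \<in> C" by simp
  have cwE: "?cw * Eij n 0 0 = ?cw" using mult_Eij0[OF cw npos] colv_colmat[OF w npos] by simp
  have "h x ?cw = 0\<^sub>m n n" if x: "x \<in> L" for x
  proof (intro eq_matI)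
    have xC: "x \<in> C" using x L_sub by auto
    fix i j assume ij: "i < dim_row (0\<^sub>m n n :: 'd mat)" "j < dim_col (0\<^sub>m n n :: 'd mat)"
    hence ij': "i < n" "j < n" by auto
    have "h x ?cw = h x (?cw * Eij n 0 0)" using cwE by simp
    also have "\<dots> = h x ?cw * Eij n 0 0" by (rule hr[OF xC cw]) simp
    finally have e1: "h x ?cw $$ (i,j) = (if j = 0 then h x ?cw $$ (i,0) else 0)"
      using mult_E00_idx[OF hc[OF xC cw] ij'] by simp
    have xi: "x * Eij n i 0 = colmat k n (colv i x)" by (rule mult_Eij0[OF xC ij'(1)])
    have "colv i x \<in> L0" unfolding L0_def using canon_colv[OF xC] L_mult[OF x, of "Eij n i 0"] xi by auto
    hence "b (colv i x) w = 0" using perp by auto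
    hence "h (x * Eij n i 0) ?cw $$ (0,0) = 0" unfolding b_def xi by simp
    moreover have "h (x * Eij n i 0) ?cw = Eij n 0 i * h x ?cw"
      using hl[OF xC cw, of "Eij n i 0"] by (simp add: sigma_Eij)
    ultimately have "h x ?cw $$ (i,0) = 0" using Eij_left_00[OF hc[OF xC cw] ij'(1)] by simp
    thus "h x ?cw $$ (i,j) = 0\<^sub>m n n $$ (i,j)" using e1 ij' by simp
  qed (use hc[OF subsetD[OF L_sub x] cw] in auto)
  hence "?cw \<in> L" using lag cw by blast
  thus ?thesis using w by (simp add: L0_def)
qed

end




lemma sum_split: "(\<Sum>i<m+(r::nat). f i) = (\<Sum>i<m. f i) + (\<Sum>s<r. f (m+s)) "
  by (induction r) (auto simp: add.assoc)

lemma lc_split: "lc {..<m+r} W c = (\<lambda>x. lc {..<m} W c x + lc {..<r} (\<lambda>s. W (m+s)) (\<lambda>s. c (m+s)) x)"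
  unfolding lc_def by (simp add: sum_split)

lemma lc_unique:
  fixes W :: "nat \<Rightarrow> nat \<Rightarrow> 'd::ring"
  assumes "indep I W" "lc I W c1 = lc I W c2"
  shows "\<forall>i\<in>I. c1 i = c2 i"
proof -
  have "lc I W (\<lambda>i. c1 i - c2 i) = (\<lambda>r. lc I W c1 r - lc I W c2 r)"
    by (simp add: lc_def fun_eq_iff right_diff_distrib sum_subtractf)
  also have "\<dots> = (\<lambda>r. 0)" using assms(2) by simp
  finally show ?thesis using assms(1) unfolding indep_def by fastforce
qed

context meta begin

lemma b_Y:
  assumes y: "y \<in> C" and u: "canon k u"
  shows "b u (colv 0 y) = bar (h y (colmat k n u) $$ (0,0))"
proof -
  have cu: "colmat k n u \<in> C" by simp
  have "colmat k n (colv 0 y) = y * Eij n 0 0" using mult_Eij0[OF y npos] by simp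
  hence "h (colmat k n u) (colmat k n (colv 0 y)) = h (colmat k n u) y * Eij n 0 0"
    using hr[OF cu y] by simp
  hence "b u (colv 0 y) = h (colmat k n u) y $$ (0,0)"
    unfolding b_def using mult_E00_idx[OF hc[OF cu y] npos npos] by simp
  also have "\<dots> = bar (h y (colmat k n u) $$ (0,0))"
    using hherm[OF y cu] hc[OF y cu] npos by simp
  finally show ?thesis .
qed

theorem even_rank: "even k"
proof -
  have L0can: "\<forall>v\<in>L0. canon k v" by (simp add: L0_def)
  obtain m U where U: "\<forall>i<m. U i \<in> L0" "indep {..<m} U" "\<forall>v\<in>L0. \<exists>c. v = lc {..<m} U c"
    using max_family[OF L0can, of 0 "\<lambda>_ _. 0"] by (auto simp: indep_def)
  have Ucan: "\<forall>i<m. canon k (U i)" using U(1) by (simp add: L0_def)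
  obtain r W where W: "\<forall>i<m. W i = U i" "\<forall>i<m+r. W i \<in> {v. canon k v}" "indep {..<m+r} W"
      "\<forall>v\<in>{v. canon k v}. \<exists>c. v = lc {..<m+r} W c"
    using max_family[of "{v. canon k v}" k m U] U Ucan by auto
  define N where "N = m + r"
  have Wcan: "\<forall>i\<in>{..<N}. canon k (W i)" using W(2) by (simp add: N_def)
  have Wspan: "\<And>v. canon k v \<Longrightarrow> \<exists>c. v = lc {..<N} W c" using W(4) by (simp add: N_def)
  have Wind: "indep {..<N} W" using W(3) by (simp add: N_def)
  have S3: "N \<le> k" using indep_bound[of "{..<N}" k W] Wcan Wind by simp
  define e where "e t = (\<lambda>x::nat. if x = t then (1::'d) else 0)" for t :: nat
  define a where "a t = (SOME c. e t = lc {..<N} W c)" for t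
  have ea: "e t = lc {..<N} W (a t)" if "t < k" for t
  proof -
    have "canon k (e t)" using that by (auto simp: e_def canon_def)
    from someI_ex[OF Wspan[OF this]] show ?thesis by (simp add: a_def)
  qed
  define F where "F t = (\<lambda>i. if i < N then a t i else 0)" for t
  have "indep {..<k} F"
    unfolding indep_def
  proof (intro allI impI ballI)
    fix c t assume h: "lc {..<k} F c = (\<lambda>r. 0)" and t: "t \<in> {..<k}"
    have z: "(\<Sum>s<k. a s i * c s) = 0" if "i < N" for i
      using fun_cong[OF h, of i] that by (simp add: lc_def F_def)
    have "c t = (\<Sum>s<k. e s t * c s)"
      using t by (subst sum_single[of t]) (auto simp: e_def)
    also have "\<dots> = (\<Sum>s<k. (\<Sum>i<N. W i t * a s i) * c s)"
      by (rule sum.cong) (auto simp: ea lc_def)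
    also have "\<dots> = (\<Sum>i<N. W i t * (\<Sum>s<k. a s i * c s))"
      by (simp add: sum_distrib_right sum_distrib_left mult.assoc sum.swap[of _ "{..<k}"])
    also have "\<dots> = 0" using z by simp
    finally show "c t = 0" .
  qed
  moreover have "\<forall>t\<in>{..<k}. canon N (F t)" by (simp add: F_def canon_def)
  ultimately have S4: "k \<le> N" using indep_bound[of "{..<k}" N F] by simp
  define G where "G s = (\<lambda>j. if j < m then b (U j) (W (m+s)) else 0)" for s
  have "indep {..<r} G"
    unfolding indep_def
  proof (intro allI impI)
    fix c assume h: "lc {..<r} G c = (\<lambda>r. 0)"
    define z where "z = lc {..<r} (\<lambda>s. W (m+s)) c"
    have Wmcan: "\<forall>s\<in>{..<r}. canon k (W (m+s))" using Wcan by (simp add: N_def)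
    have zc: "canon k z" unfolding z_def using Wmcan by (rule canon_lc)
    have bz: "b (U j) z = 0" if "j < m" for j
      using fun_cong[OF h, of j] that b_lc2[OF _ Wmcan] by (simp add: z_def lc_def G_def)
    have "\<forall>v\<in>L0. b v z = 0"
    proof
      fix v assume "v \<in> L0"
      then obtain d where d: "v = lc {..<m} U d" using U(3) by blast
      show "b v z = 0" unfolding d using b_lc1[of "{..<m}" U d z] Ucan bz by simp
    qed
    hence "z \<in> L0" using L0_perp zc by blast
    then obtain d where d: "z = lc {..<m} U d" using U(3) by blast
    define c' where "c' i = (if i < m then d i else - c (i - m))" for i
    have "lc {..<m+r} W c' = (\<lambda>x. 0)"
    proof -
      have "lc {..<m} W c' = lc {..<m} U d" by (rule lc_cong) (auto simp: W(1) c'_def)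
      moreover have "lc {..<r} (\<lambda>s. W (m+s)) (\<lambda>s. c' (m+s)) = (\<lambda>x. - z x)"
        by (simp add: z_def lc_def c'_def sum_negf fun_eq_iff)
      ultimately show ?thesis unfolding lc_split using d by simp
    qed
    hence "\<forall>i\<in>{..<m+r}. c' i = 0" using W(3) unfolding indep_def by blast
    thus "\<forall>s\<in>{..<r}. c s = 0"
    proof (intro ballI)
      fix s assume "\<forall>i\<in>{..<m+r}. c' i = 0" "s \<in> {..<r}"
      hence "c' (m+s) = 0" by simp
      thus "c s = 0" by (simp add: c'_def)
    qed
  qed
  moreover have "\<forall>s\<in>{..<r}. canon m (G s)" by (simp add: G_def canon_def)
  ultimately have S5: "r \<le> m" using indep_bound[of "{..<r}" m G] by simp
  define coord where "coord v = (SOME c. v = lc {..<N} W c)" for v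
  have coord: "v = lc {..<N} W (coord v)" if "canon k v" for v
    using someI_ex[OF Wspan[OF that]] by (simp add: coord_def)
  have coord_add: "coord (\<lambda>x. v x + w x) i = coord v i + coord w i" if "canon k v" "canon k w" "i < N" for v w i
  proof -
    have "canon k (\<lambda>x. v x + w x)" using that by (simp add: canon_def)
    hence "lc {..<N} W (coord (\<lambda>x. v x + w x)) = lc {..<N} W (\<lambda>i. coord v i + coord w i)"
      using coord[OF that(1)] coord[OF that(2)] coord
      by (simp add: lc_def fun_eq_iff distrib_left sum.distrib)
    thus ?thesis using lc_unique[OF Wind] that(3) by auto
  qed
  have coord_scale: "coord (\<lambda>x. v x * d) i = coord v i * d" if "canon k v" "i < N" for v d i
  proof -
    have "canon k (\<lambda>x. v x * d)" using that by (simp add: canon_def)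
    hence "lc {..<N} W (coord (\<lambda>x. v x * d)) = lc {..<N} W (\<lambda>i. coord v i * d)"
      using coord[OF that(1)] coord
      by (simp add: lc_def fun_eq_iff sum_distrib_right mult.assoc)
    thus ?thesis using lc_unique[OF Wind] that(2) by auto
  qed
  have coord_lc: "coord (lc I V c) i = (\<Sum>l\<in>I. coord (V l) i * c l)"
    if "finite I" "\<forall>l\<in>I. canon k (V l)" "i < N" for I V c i
    using lin_lc[of k "\<lambda>v x. coord v i" I V c] coord_add coord_scale that
    by (simp add: lc_def fun_eq_iff)
  have coordW: "coord (W j) p = (if p = j then 1 else 0)" if "j < N" "p < N" for j p
  proof -
    have "W j = lc {..<N} W (\<lambda>i. if i = j then 1 else 0)"
      unfolding lc_def fun_eq_iff using that by (intro allI, subst sum_single[of j N]) auto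
    moreover have "W j = lc {..<N} W (coord (W j))" using coord Wcan that by auto
    ultimately have "lc {..<N} W (coord (W j)) = lc {..<N} W (\<lambda>i. if i = j then 1 else 0)"
      by simp
    from lc_unique[OF Wind this] that show ?thesis by auto
  qed
  define g where "g p x = mat n n (\<lambda>(i,j). if i = 0 then coord (colv j x) p else 0)" for p x
  have glin: "A_linear n k (g p)" if p: "p < N" for p
    unfolding A_linear_def
  proof (intro conjI ballI)
    fix x assume "x \<in> C" show "g p x \<in> carrier_mat n n" by (simp add: g_def)
  next
    fix x y assume xy: "x \<in> C" "y \<in> C"
    show "g p (x + y) = g p x + g p y"
      using xy p by (intro eq_matI) (auto simp: g_def colv_add canon_colv coord_add)
  next
    fix x aa :: "'d mat" assume x: "x \<in> C" and aa: "aa \<in> carrier_mat n n"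
    show "g p (x * aa) = g p x * aa"
    proof (intro eq_matI)
      fix i j assume ij: "i < dim_row (g p x * aa)" "j < dim_col (g p x * aa)"
      hence ij': "i < n" "j < n" using aa by (auto simp: g_def)
      have colxa: "colv j (x * aa) = lc {..<n} (\<lambda>l. colv l x) (\<lambda>l. aa $$ (l,j))"
      proof
        fix rr show "colv j (x * aa) rr = lc {..<n} (\<lambda>l. colv l x) (\<lambda>l. aa $$ (l,j)) rr"
          using x aa ij' mult_idx[OF x aa, of rr j] by (auto simp: colv_def lc_def)
      qed
      have cc: "\<forall>l\<in>{..<n}. canon k (colv l x)" using canon_colv[OF x] by auto
      have "(g p x * aa) $$ (i,j) = (\<Sum>l<n. g p x $$ (i,l) * aa $$ (l,j))"
        using ij' aa by (intro mult_idx[of _ n n]) (auto simp: g_def)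
      also have "\<dots> = (if i = 0 then (\<Sum>l<n. coord (colv l x) p * aa $$ (l,j)) else 0)"
        using ij' by (auto simp: g_def intro!: sum.cong sum.neutral)
      also have "\<dots> = g p (x * aa) $$ (i,j)"
        using ij' colxa coord_lc[OF _ cc p] by (simp add: g_def)
      finally show "g p (x * aa) $$ (i,j) = (g p x * aa) $$ (i,j)" by simp
    qed (use aa in \<open>auto simp: g_def\<close>)
  qed
  define y where "y p = (SOME y. y \<in> C \<and> (\<forall>x\<in>C. g p x = h y x))" for p
  have y: "y p \<in> C \<and> (\<forall>x\<in>C. g p x = h (y p) x)" if "p < N" for p
    unfolding y_def by (rule someI_ex[OF nonsing[OF glin[OF that]]])
  define Y where "Y p = colv 0 (y p)" for p
  have bUY: "b (U j) (Y p) = (if p = j then 1 else 0)" if "j < m" "p < m" for j p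
  proof -
    have pN: "p < N" "j < N" using that by (auto simp: N_def)
    have "b (U j) (Y p) = bar (h (y p) (colmat k n (U j)) $$ (0,0))"
      unfolding Y_def using b_Y[of "y p" "U j"] y[OF pN(1)] Ucan that by simp
    also have "h (y p) (colmat k n (U j)) = g p (colmat k n (U j))" using y[OF pN(1)] by simp
    also have "g p (colmat k n (U j)) $$ (0,0) = coord (U j) p"
      using npos colv_colmat[of k "U j" n] Ucan that by (simp add: g_def)
    also have "coord (U j) p = (if p = j then 1 else 0)"
      using coordW[OF pN(2) pN(1)] W(1) that by simp
    finally show ?thesis by simp
  qed
  define H where "H p = (\<lambda>s. if s < r then coord (Y p) (m+s) else 0)" for p
  have "indep {..<m} H"
    unfolding indep_def
  proof (intro allI impI)
    fix d assume h: "lc {..<m} H d = (\<lambda>r. 0)"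
    have Ycan: "\<forall>p\<in>{..<m}. canon k (Y p)"
    proof
      fix p assume "p \<in> {..<m}"
      hence "y p \<in> C" using y by (simp add: N_def)
      thus "canon k (Y p)" unfolding Y_def by (rule canon_colv)
    qed
    define z where "z = lc {..<m} Y d"
    have zc: "canon k z" unfolding z_def using Ycan by (rule canon_lc)
    have cz: "coord z (m+s) = 0" if "s < r" for s
    proof -
      have "coord z (m+s) = (\<Sum>p<m. coord (Y p) (m+s) * d p)"
        unfolding z_def using that by (intro coord_lc[OF _ Ycan]) (auto simp: N_def)
      also have "\<dots> = 0" using fun_cong[OF h, of s] that by (simp add: lc_def H_def)
      finally show ?thesis .
    qed
    have "z = lc {..<m} U (coord z)"
    proof -
      have "z = lc {..<m+r} W (coord z)" using coord[OF zc] by (simp add: N_def)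
      also have "\<dots> = lc {..<m} U (coord z)"
        unfolding lc_split using cz W(1) by (simp add: lc_def fun_eq_iff)
      finally show ?thesis .
    qed
    moreover have "lc {..<m} U (coord z) \<in> L0" using U(1) by (intro lc_L0) auto
    ultimately have zL: "z \<in> L0" by simp
    show "\<forall>j\<in>{..<m}. d j = 0"
    proof
      fix j assume j: "j \<in> {..<m}"
      have "0 = b (U j) z" using L0_orth U(1) zL j by simp
      also have "\<dots> = (\<Sum>p<m. b (U j) (Y p) * d p)" unfolding z_def using b_lc2[OF _ Ycan] by simp
      also have "\<dots> = (\<Sum>p<m. (if p = j then d p else 0))" using bUY j by (intro sum.cong) auto
      also have "\<dots> = d j" using j by simp
      finally show "d j = 0" by simp
    qed
  qed
  moreover have "\<forall>p\<in>{..<m}. canon r (H p)" by (simp add: H_def canon_def)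
  ultimately have S6: "m \<le> r" using indep_bound[of "{..<m}" r H] by simp
  have "k = 2 * m" using S3 S4 S5 S6 by (simp add: N_def)
  thus ?thesis by simp
qed

end




context invol begin

lemma hform_herm:
  assumes cs: "bar c = c" and c0: "c \<noteq> 0" and n: "0 < n"
  shows "herm_form bar n (h_form bar n c)"
proof -
  define H where "H x y = mat n n (\<lambda>(i,j). bar (x $$ (0, i)) * c * y $$ (0, j))" for x y :: "'d mat"
  have hf: "h_form bar n c = (1, H)" by (simp add: h_form_def H_def[abs_def])
  let ?C = "carrier_mat 1 n :: 'd mat set"
  have Hc: "H x y \<in> carrier_mat n n" for x y by (simp add: H_def)
  have Hd: "dim_row (H x y) = n" "dim_col (H x y) = n" for x y by (simp_all add: H_def)
  have Hidx: "i < n \<Longrightarrow> j < n \<Longrightarrow> H x y $$ (i,j) = bar (x $$ (0, i)) * c * y $$ (0, j)" for x y i j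
    by (simp add: H_def)
  have A2: "H (x + y) z = H x z + H y z \<and> H z (x + y) = H z x + H z y"
    if "x \<in> ?C" "y \<in> ?C" "z \<in> ?C" for x y z
    using that by (intro conjI eq_matI) (auto simp: Hidx Hd add distrib_left distrib_right)
  have A3: "H (x * a) (y * b) = sigma bar a * H x y * b"
    if x: "x \<in> ?C" and y: "y \<in> ?C" and a: "a \<in> carrier_mat n n" and b: "b \<in> carrier_mat n n" for x y a b
  proof (intro eq_matI)
    fix i j assume "i < dim_row (sigma bar a * H x y * b)" "j < dim_col (sigma bar a * H x y * b)"
    hence ij: "i < n" "j < n" using a b by auto
    have "H (x * a) (y * b) $$ (i,j) = bar ((x * a) $$ (0,i)) * c * (y * b) $$ (0,j)" using ij by (simp add: Hidx Hd)
    also have "\<dots> = bar (\<Sum>l<n. x $$ (0,l) * a $$ (l,i)) * c * (\<Sum>m<n. y $$ (0,m) * b $$ (m,j))"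
      using mult_idx[OF x a _ ij(1)] mult_idx[OF y b _ ij(2)] by simp
    also have "\<dots> = (\<Sum>m<n. \<Sum>l<n. bar (a $$ (l,i)) * (bar (x $$ (0,l)) * c * y $$ (0,m)) * b $$ (m,j))"
      by (simp add: sum mul sum_distrib_left sum_distrib_right mult.assoc)
    also have "\<dots> = (\<Sum>m<n. (\<Sum>l<n. sigma bar a $$ (i,l) * H x y $$ (l,m)) * b $$ (m,j))"
      using ij a by (intro sum.cong refl) (auto simp: sum_distrib_right Hidx Hd)
    also have "\<dots> = (sigma bar a * H x y * b) $$ (i,j)"
      using mult_idx[OF mult_carrier_mat[OF sigma_carrier[OF a] Hc] b ij]
        mult_idx[OF sigma_carrier[OF a] Hc ij(1)] by simp
    finally show "H (x * a) (y * b) $$ (i,j) = (sigma bar a * H x y * b) $$ (i,j)" .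
  qed (use a b in \<open>auto simp: H_def\<close>)
  have A4: "H y x = sigma bar (H x y)" for x y
    by (intro eq_matI) (auto simp: Hidx Hd H_def mul inv cs mult.assoc)
  have A5: "\<exists>!y. y \<in> ?C \<and> (\<forall>x\<in>?C. g x = H y x)" if g: "A_linear n 1 g" for g
  proof -
    have gc: "x \<in> ?C \<Longrightarrow> g x \<in> carrier_mat n n" for x using g by (simp add: A_linear_def)
    have gm: "x \<in> ?C \<Longrightarrow> a \<in> carrier_mat n n \<Longrightarrow> g (x * a) = g x * a" for x a
      using g by (simp add: A_linear_def)
    define r0 where "r0 = mat 1 n (\<lambda>(i,j). if j = 0 then (1::'d) else 0)"
    have r0c: "r0 \<in> ?C" by (simp add: r0_def)
    define w where "w i = g r0 $$ (i,0)" for i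
    have r0E: "r0 * Eij n 0 0 = r0"
    proof (intro eq_matI)
      fix i j assume "i < dim_row r0" "j < dim_col r0"
      thus "(r0 * Eij n 0 0) $$ (i,j) = r0 $$ (i,j)"
        using mult_E00_idx[OF r0c] by (simp add: r0_def)
    qed (auto simp: r0_def)
    have gr0: "g r0 $$ (i,j) = (if j = 0 then w i else 0)" if "i < n" "j < n" for i j
    proof -
      have "g r0 = g r0 * Eij n 0 0" using gm[OF r0c, of "Eij n 0 0"] r0E by simp
      thus ?thesis using mult_E00_idx[OF gc[OF r0c] that] by (simp add: w_def)
    qed
    have gx: "g x $$ (i,j) = w i * x $$ (0,j)" if x: "x \<in> ?C" and ij: "i < n" "j < n" for x i j
    proof -
      define X where "X = mat n n (\<lambda>(i,j). if i = 0 then x $$ (0,j) else 0)"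
      have Xc: "X \<in> carrier_mat n n" by (simp add: X_def)
      have "r0 * X = x"
      proof (intro eq_matI)
        fix i' j' assume ij': "i' < dim_row x" "j' < dim_col x"
        hence "i' = 0" "j' < n" using x by auto
        have "(r0 * X) $$ (i',j') = (\<Sum>l<n. r0 $$ (i',l) * X $$ (l,j'))"
          using ij' x Xc r0c by (intro mult_idx[of _ 1 n _ n]) auto
        also have "\<dots> = r0 $$ (i',0) * X $$ (0,j')"
          using ij' x n by (intro sum_single) (auto simp: r0_def X_def)
        finally show "(r0 * X) $$ (i',j') = x $$ (i',j')"
          using \<open>i' = 0\<close> \<open>j' < n\<close> n by (simp add: r0_def X_def)
      qed (use x in \<open>auto simp: r0_def X_def\<close>)
      hence "g x = g r0 * X" using gm[OF r0c Xc] by simp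
      hence "g x $$ (i,j) = (\<Sum>l<n. g r0 $$ (i,l) * X $$ (l,j))"
        using mult_idx[OF gc[OF r0c] Xc ij] by simp
      also have "\<dots> = g r0 $$ (i,0) * X $$ (0,j)"
        using ij n by (intro sum_single) (auto simp: gr0)
      finally show ?thesis using ij n by (simp add: X_def w_def)
    qed
    define y0 where "y0 = mat 1 n (\<lambda>(_,j). bar (w j * inverse c))"
    have y0c: "y0 \<in> ?C" by (simp add: y0_def)
    have ex: "\<forall>x\<in>?C. g x = H y0 x"
    proof
      fix x assume x: "x \<in> ?C"
      show "g x = H y0 x"
      proof (intro eq_matI)
        fix i j assume "i < dim_row (H y0 x)" "j < dim_col (H y0 x)"
        hence ij: "i < n" "j < n" by (auto simp: H_def)
        show "g x $$ (i,j) = H y0 x $$ (i,j)"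
          using ij c0 by (simp add: gx[OF x ij] Hidx Hd y0_def inv mult.assoc)
      qed (use gc[OF x] in \<open>auto simp: H_def\<close>)
    qed
    have un: "y' = y0" if y': "y' \<in> ?C" "\<forall>x\<in>?C. g x = H y' x" for y'
    proof (intro eq_matI)
      fix i j assume "i < dim_row y0" "j < dim_col y0"
      hence ij: "i = 0" "j < n" by (auto simp: y0_def)
      have "w j = H y' r0 $$ (j,0)" using gr0[OF ij(2) n] y'(2) r0c by simp
      also have "\<dots> = bar (y' $$ (0,j)) * c" using ij n by (simp add: Hidx Hd r0_def)
      finally have "w j * inverse c = bar (y' $$ (0,j))" using c0
        by (simp add: mult.assoc)
      hence "bar (w j * inverse c) = y' $$ (0,j)" using inv[of "y' $$ (0,j)"] by simp
      hence "y' $$ (0,j) = bar (w j * inverse c)" by simp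
      thus "y' $$ (i,j) = y0 $$ (i,j)" using ij by (simp add: y0_def)
    qed (use y' in \<open>auto simp: y0_def\<close>)
    show ?thesis using ex un y0c by blast
  qed
  show ?thesis unfolding hf herm_form_def prod.case
  proof (intro conjI)
    show "\<forall>x\<in>?C. \<forall>y\<in>?C. H x y \<in> carrier_mat n n" using Hc by blast
    show "\<forall>x\<in>?C. \<forall>y\<in>?C. \<forall>z\<in>?C. H (x + y) z = H x z + H y z \<and> H z (x + y) = H z x + H z y"
      using A2 by blast
    show "\<forall>x\<in>?C. \<forall>y\<in>?C. \<forall>a\<in>carrier_mat n n. \<forall>b\<in>carrier_mat n n.
         H (x * a) (y * b) = sigma bar a * H x y * b" using A3 by blast
    show "\<forall>x\<in>?C. \<forall>y\<in>?C. H y x = sigma bar (H x y)" using A4 by blast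
    show "\<forall>g. A_linear n 1 g \<longrightarrow> (\<exists>!y. y \<in> ?C \<and> (\<forall>x\<in>?C. g x = H y x))"
      using A5 by blast
  qed
qed

end




context hform begin
lemma nonsing_unique: "A_linear n k g \<Longrightarrow> y \<in> C \<Longrightarrow> (\<forall>x\<in>C. g x = h y x) \<Longrightarrow> y' \<in> C \<Longrightarrow> (\<forall>x\<in>C. g x = h y' x) \<Longrightarrow> y = y'"
  using herm'[THEN conjunct2, THEN conjunct2, THEN conjunct2, THEN conjunct2] by metis
lemma h_zero2: "x \<in> C \<Longrightarrow> h x (0\<^sub>m k n) = 0\<^sub>m n n"
  using hadd2[of "0\<^sub>m k n" "0\<^sub>m k n" x] mat_self_add[OF hc[of x "0\<^sub>m k n"]] by simp
end

definition stack :: "nat \<Rightarrow> nat \<Rightarrow> nat \<Rightarrow> 'd mat \<Rightarrow> 'd mat \<Rightarrow> 'd mat" where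
  "stack k1 k2 n x1 x2 = mat (k1 + k2) n (\<lambda>(i,j). if i < k1 then x1 $$ (i,j) else x2 $$ (i - k1, j))"

lemma top_carrier[simp]: "top_rows k1 n x \<in> carrier_mat k1 n" by (simp add: top_rows_def)
lemma bot_carrier[simp]: "bottom_rows k1 k2 n x \<in> carrier_mat k2 n" by (simp add: bottom_rows_def)
lemma stack_carrier[simp]: "stack k1 k2 n x1 x2 \<in> carrier_mat (k1+k2) n" by (simp add: stack_def)

lemma top_add: "x \<in> carrier_mat (k1+k2) n \<Longrightarrow> y \<in> carrier_mat (k1+k2) n \<Longrightarrow>
   top_rows k1 n (x + y) = top_rows k1 n x + top_rows k1 n y"
  by (intro eq_matI) (auto simp: top_rows_def)
lemma bot_add: "x \<in> carrier_mat (k1+k2) n \<Longrightarrow> y \<in> carrier_mat (k1+k2) n \<Longrightarrow>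
   bottom_rows k1 k2 n (x + y) = bottom_rows k1 k2 n x + bottom_rows k1 k2 n y"
  by (intro eq_matI) (auto simp: bottom_rows_def)

lemma top_mult:
  fixes x :: "'d::semiring_0 mat"
  assumes x: "x \<in> carrier_mat (k1+k2) n" and a: "a \<in> carrier_mat n n"
  shows "top_rows k1 n (x * a) = top_rows k1 n x * a"
proof (intro eq_matI)
  fix i j assume "i < dim_row (top_rows k1 n x * a)" "j < dim_col (top_rows k1 n x * a)"
  hence ij: "i < k1" "j < n" using a by (auto simp: top_rows_def)
  have "(top_rows k1 n x * a) $$ (i,j) = (\<Sum>l<n. top_rows k1 n x $$ (i,l) * a $$ (l,j))"
    by (rule mult_idx[OF top_carrier a ij])
  also have "\<dots> = (\<Sum>l<n. x $$ (i,l) * a $$ (l,j))" using ij by (intro sum.cong) (auto simp: top_rows_def)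
  also have "\<dots> = (x * a) $$ (i,j)" using mult_idx[OF x a, of i j] ij by simp
  finally show "top_rows k1 n (x * a) $$ (i,j) = (top_rows k1 n x * a) $$ (i,j)"
    using ij by (simp add: top_rows_def)
qed (use a in \<open>auto simp: top_rows_def\<close>)

lemma bot_mult:
  fixes x :: "'d::semiring_0 mat"
  assumes x: "x \<in> carrier_mat (k1+k2) n" and a: "a \<in> carrier_mat n n"
  shows "bottom_rows k1 k2 n (x * a) = bottom_rows k1 k2 n x * a"
proof (intro eq_matI)
  fix i j assume "i < dim_row (bottom_rows k1 k2 n x * a)" "j < dim_col (bottom_rows k1 k2 n x * a)"
  hence ij: "i < k2" "j < n" using a by (auto simp: bottom_rows_def)
  have "(bottom_rows k1 k2 n x * a) $$ (i,j) = (\<Sum>l<n. bottom_rows k1 k2 n x $$ (i,l) * a $$ (l,j))"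
    by (rule mult_idx[OF bot_carrier a ij])
  also have "\<dots> = (\<Sum>l<n. x $$ (i + k1,l) * a $$ (l,j))" using ij by (intro sum.cong) (auto simp: bottom_rows_def)
  also have "\<dots> = (x * a) $$ (i + k1,j)" using mult_idx[OF x a, of "i+k1" j] ij by simp
  finally show "bottom_rows k1 k2 n (x * a) $$ (i,j) = (bottom_rows k1 k2 n x * a) $$ (i,j)"
    using ij by (simp add: bottom_rows_def)
qed (use a in \<open>auto simp: bottom_rows_def\<close>)

lemma top_stack: "x1 \<in> carrier_mat k1 n \<Longrightarrow> top_rows k1 n (stack k1 k2 n x1 x2) = x1"
  by (intro eq_matI) (auto simp: top_rows_def stack_def)
lemma bot_stack: "x2 \<in> carrier_mat k2 n \<Longrightarrow> bottom_rows k1 k2 n (stack k1 k2 n x1 x2) = x2"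
  by (intro eq_matI) (auto simp: bottom_rows_def stack_def)
lemma stack_tb: "x \<in> carrier_mat (k1+k2) n \<Longrightarrow> stack k1 k2 n (top_rows k1 n x) (bottom_rows k1 k2 n x) = x"
  by (intro eq_matI) (auto simp: top_rows_def bottom_rows_def stack_def)
lemma stack_add: "x1 \<in> carrier_mat k1 n \<Longrightarrow> y1 \<in> carrier_mat k1 n \<Longrightarrow> x2 \<in> carrier_mat k2 n \<Longrightarrow> y2 \<in> carrier_mat k2 n \<Longrightarrow>
  stack k1 k2 n (x1 + y1) (x2 + y2) = stack k1 k2 n x1 x2 + stack k1 k2 n y1 y2"
  by (intro eq_matI) (auto simp: stack_def)
lemma stack_mult:
  fixes x1 :: "'d::semiring_0 mat"
  assumes "x1 \<in> carrier_mat k1 n" "x2 \<in> carrier_mat k2 n" "a \<in> carrier_mat n n"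
  shows "stack k1 k2 n x1 x2 * a = stack k1 k2 n (x1 * a) (x2 * a)"
proof -
  have "stack k1 k2 n x1 x2 * a = stack k1 k2 n (top_rows k1 n (stack k1 k2 n x1 x2 * a)) (bottom_rows k1 k2 n (stack k1 k2 n x1 x2 * a))"
    using stack_tb[OF mult_carrier_mat[OF stack_carrier assms(3)], of k1 k2 x1 x2] by simp
  also have "\<dots> = stack k1 k2 n (x1 * a) (x2 * a)"
    using assms top_mult[OF stack_carrier assms(3), of k1 k2 x1 x2] bot_mult[OF stack_carrier assms(3), of k1 k2 x1 x2]
    by (simp add: top_stack bot_stack)
  finally show ?thesis .
qed

lemma add4:
  fixes A :: "'d::comm_monoid_add mat"
  assumes "A \<in> carrier_mat m n" "B \<in> carrier_mat m n" "C \<in> carrier_mat m n" "D \<in> carrier_mat m n"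
  shows "(A + B) + (C + D) = (A + C) + (B + D)"
  using assms by (intro eq_matI) (auto simp: ac_simps)

lemma distrib3:
  fixes S :: "'d::semiring_0 mat"
  assumes "S \<in> carrier_mat n n" "P \<in> carrier_mat n n" "Q \<in> carrier_mat n n" "B \<in> carrier_mat n n"
  shows "S * P * B + S * Q * B = S * (P + Q) * B"
  using assms by (simp add: mult_add_distrib_mat[of S n n] add_mult_distrib_mat[of _ n n])

lemma osum_eq: "osum n (k1,h1) (k2,h2) = (k1 + k2, \<lambda>x y. h1 (top_rows k1 n x) (top_rows k1 n y)
                    + h2 (bottom_rows k1 k2 n x) (bottom_rows k1 k2 n y))"
  by (simp add: osum_def)

context invol begin

lemma osum_herm:
  assumes H1: "herm_form bar n (k1,h1)" and H2: "herm_form bar n (k2,h2)" and n: "0 < n"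
  shows "herm_form bar n (osum n (k1,h1) (k2,h2))"
proof -
  interpret A: hform bar n k1 h1 using H1 n by unfold_locales
  interpret B: hform bar n k2 h2 using H2 n by unfold_locales
  let ?t = "top_rows k1 n :: 'd mat \<Rightarrow> 'd mat" and ?b = "bottom_rows k1 k2 n :: 'd mat \<Rightarrow> 'd mat"
  define HH where "HH x y = h1 (?t x) (?t y) + h2 (?b x) (?b y)" for x y
  let ?C = "carrier_mat (k1+k2) n :: 'd mat set"
  have eq: "osum n (k1,h1) (k2,h2) = (k1+k2, HH)" by (simp add: osum_eq HH_def[abs_def])
  have c1: "HH x y \<in> carrier_mat n n" for x y
    unfolding HH_def using A.hc B.hc by simp
  have c2: "HH (x + y) z = HH x z + HH y z \<and> HH z (x + y) = HH z x + HH z y"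
    if "x \<in> ?C" "y \<in> ?C" "z \<in> ?C" for x y z
  proof -
    have "HH (x + y) z = HH x z + HH y z"
      unfolding HH_def using that A.hc B.hc
      by (simp add: top_add bot_add A.hadd1 B.hadd1 add4[of _ n n])
    moreover have "HH z (x + y) = HH z x + HH z y"
      unfolding HH_def using that A.hc B.hc
      by (simp add: top_add bot_add A.hadd2 B.hadd2 add4[of _ n n])
    ultimately show ?thesis by simp
  qed
  have c3: "HH (x * a) (y * b) = sigma bar a * HH x y * b"
    if "x \<in> ?C" "y \<in> ?C" "a \<in> carrier_mat n n" "b \<in> carrier_mat n n" for x y a b
  proof -
    have t: "?t (x * a) = ?t x * a" "?t (y * b) = ?t y * b" using that by (simp_all add: top_mult)
    have u: "?b (x * a) = ?b x * a" "?b (y * b) = ?b y * b" using that by (simp_all add: bot_mult)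
    have "HH (x * a) (y * b) = sigma bar a * h1 (?t x) (?t y) * b + sigma bar a * h2 (?b x) (?b y) * b"
      unfolding HH_def t u using that by (simp add: A.hsesq B.hsesq)
    also have "\<dots> = sigma bar a * HH x y * b" unfolding HH_def
      by (rule distrib3[OF sigma_carrier[OF that(3)] A.hc B.hc that(4)]) simp_all
    finally show ?thesis .
  qed
  have c4: "HH y x = sigma bar (HH x y)" if "x \<in> ?C" "y \<in> ?C" for x y
    unfolding HH_def using A.hherm[of "?t x" "?t y"] B.hherm[of "?b x" "?b y"]
      sigma_add[OF A.hc[of "?t x" "?t y"] B.hc[of "?b x" "?b y"]] by simp
  have c5: "\<exists>!y. y \<in> ?C \<and> (\<forall>x\<in>?C. g x = HH y x)" if g: "A_linear n (k1+k2) g" for g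
  proof -
    have gc: "x \<in> ?C \<Longrightarrow> g x \<in> carrier_mat n n" for x using g by (simp add: A_linear_def)
    have ga: "x \<in> ?C \<Longrightarrow> y \<in> ?C \<Longrightarrow> g (x + y) = g x + g y" for x y using g by (simp add: A_linear_def)
    have gm: "x \<in> ?C \<Longrightarrow> a \<in> carrier_mat n n \<Longrightarrow> g (x * a) = g x * a" for x a
      using g by (simp add: A_linear_def)
    define g1 where "g1 x1 = g (stack k1 k2 n x1 (0\<^sub>m k2 n))" for x1
    define g2 where "g2 x2 = g (stack k1 k2 n (0\<^sub>m k1 n) x2)" for x2
    have l1: "A_linear n k1 g1" unfolding A_linear_def g1_def
    proof (intro conjI ballI)
      fix x y :: "'d mat" assume "x \<in> carrier_mat k1 n" "y \<in> carrier_mat k1 n"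
      thus "g (stack k1 k2 n (x + y) (0\<^sub>m k2 n)) = g (stack k1 k2 n x (0\<^sub>m k2 n)) + g (stack k1 k2 n y (0\<^sub>m k2 n))"
        using stack_add[of x k1 n y "0\<^sub>m k2 n" k2 "0\<^sub>m k2 n"] ga by simp
    next
      fix x a :: "'d mat" assume "x \<in> carrier_mat k1 n" "a \<in> carrier_mat n n"
      thus "g (stack k1 k2 n (x * a) (0\<^sub>m k2 n)) = g (stack k1 k2 n x (0\<^sub>m k2 n)) * a"
        using stack_mult[of x k1 n "0\<^sub>m k2 n" k2 a] gm[of "stack k1 k2 n x (0\<^sub>m k2 n)" a] by simp
    qed (simp add: gc)
    have l2: "A_linear n k2 g2" unfolding A_linear_def g2_def
    proof (intro conjI ballI)
      fix x y :: "'d mat" assume "x \<in> carrier_mat k2 n" "y \<in> carrier_mat k2 n"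
      thus "g (stack k1 k2 n (0\<^sub>m k1 n) (x + y)) = g (stack k1 k2 n (0\<^sub>m k1 n) x) + g (stack k1 k2 n (0\<^sub>m k1 n) y)"
        using stack_add[of "0\<^sub>m k1 n" k1 n "0\<^sub>m k1 n" x k2 y] ga by simp
    next
      fix x a :: "'d mat" assume "x \<in> carrier_mat k2 n" "a \<in> carrier_mat n n"
      thus "g (stack k1 k2 n (0\<^sub>m k1 n) (x * a)) = g (stack k1 k2 n (0\<^sub>m k1 n) x) * a"
        using stack_mult[of "0\<^sub>m k1 n" k1 n x k2 a] gm[of "stack k1 k2 n (0\<^sub>m k1 n) x" a] by simp
    qed (simp add: gc)
    obtain y1 where y1: "y1 \<in> carrier_mat k1 n" "\<forall>x\<in>carrier_mat k1 n. g1 x = h1 y1 x"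
      using A.nonsing[OF l1] by blast
    obtain y2 where y2: "y2 \<in> carrier_mat k2 n" "\<forall>x\<in>carrier_mat k2 n. g2 x = h2 y2 x"
      using B.nonsing[OF l2] by blast
    have split: "g x = g1 (?t x) + g2 (?b x)" if x: "x \<in> ?C" for x
    proof -
      have "x = stack k1 k2 n (?t x + 0\<^sub>m k1 n) (0\<^sub>m k2 n + ?b x)" using stack_tb[OF x] by simp
      also have "\<dots> = stack k1 k2 n (?t x) (0\<^sub>m k2 n) + stack k1 k2 n (0\<^sub>m k1 n) (?b x)"
        by (rule stack_add) auto
      finally show ?thesis unfolding g1_def g2_def using ga by (metis stack_carrier)
    qed
    define y where "y = stack k1 k2 n y1 y2"
    have ex: "\<forall>x\<in>?C. g x = HH y x"
      using split y1 y2 by (simp add: HH_def y_def top_stack bot_stack)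
    have un: "y' = y" if y': "y' \<in> ?C" "\<forall>x\<in>?C. g x = HH y' x" for y'
    proof -
      have "\<forall>x\<in>carrier_mat k1 n. g1 x = h1 (?t y') x"
      proof
        fix x :: "'d mat" assume x: "x \<in> carrier_mat k1 n"
        have "g1 x = HH y' (stack k1 k2 n x (0\<^sub>m k2 n))" using y' by (simp add: g1_def)
        also have "\<dots> = h1 (?t y') x" using x B.h_zero2 A.hc by (simp add: HH_def top_stack bot_stack)
        finally show "g1 x = h1 (?t y') x" .
      qed
      hence e1: "?t y' = y1" using A.nonsing_unique[OF l1] y1 by simp
      have "\<forall>x\<in>carrier_mat k2 n. g2 x = h2 (?b y') x"
      proof
        fix x :: "'d mat" assume x: "x \<in> carrier_mat k2 n"
        have "g2 x = HH y' (stack k1 k2 n (0\<^sub>m k1 n) x)" using y' by (simp add: g2_def)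
        also have "\<dots> = h2 (?b y') x" using x A.h_zero2 B.hc by (simp add: HH_def top_stack bot_stack)
        finally show "g2 x = h2 (?b y') x" .
      qed
      hence e2: "?b y' = y2" using B.nonsing_unique[OF l2] y2 by simp
      show ?thesis using stack_tb[OF y'(1)] e1 e2 by (simp add: y_def)
    qed
    show ?thesis using ex un by (intro ex1I[of _ y]) (auto simp: y_def)
  qed
  show ?thesis unfolding eq herm_form_def prod.case
  proof (intro conjI)
    show "\<forall>x\<in>?C. \<forall>y\<in>?C. HH x y \<in> carrier_mat n n" using c1 by blast
    show "\<forall>x\<in>?C. \<forall>y\<in>?C. \<forall>z\<in>?C. HH (x + y) z = HH x z + HH y z \<and> HH z (x + y) = HH z x + HH z y"
      using c2 by blast
    show "\<forall>x\<in>?C. \<forall>y\<in>?C. \<forall>a\<in>carrier_mat n n. \<forall>b\<in>carrier_mat n n.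
         HH (x * a) (y * b) = sigma bar a * HH x y * b" using c3 by blast
    show "\<forall>x\<in>?C. \<forall>y\<in>?C. HH y x = sigma bar (HH x y)" using c4 by blast
    show "\<forall>g. A_linear n (k1+k2) g \<longrightarrow> (\<exists>!y. y \<in> ?C \<and> (\<forall>x\<in>?C. g x = HH y x))"
      using c5 by blast
  qed
qed

end




lemma rank_osum: "rank (osum n f g) = rank f + rank g"
  by (cases f, cases g) (simp add: osum_def rank_def)

lemma length_box: "length (box_exps ps qs) = length ps * length qs"
  by (induction ps) (auto simp: box_exps_def)

lemma isometric_refl: "isometric n F F"
proof (cases F)
  case (Pair k h)
  show ?thesis unfolding Pair isometric_def prod.case
    by (rule exI[of _ id]) (simp add: bij_betw_id)
qed

definition zform :: "nat \<Rightarrow> 'd::division_ring form" where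
  "zform n = (0, \<lambda>x y. 0\<^sub>m n n)"

lemma carrier0: "x \<in> carrier_mat 0 n \<Longrightarrow> y \<in> carrier_mat 0 n \<Longrightarrow> x = y"
  by (intro eq_matI) auto

context invol begin

lemma zform_metabolic: "metabolic bar n (zform n)"
proof -
  let ?C = "carrier_mat 0 n :: 'd mat set"
  have ns: "\<exists>!y. y \<in> ?C \<and> (\<forall>x\<in>?C. g x = 0\<^sub>m n n)" if g: "A_linear n 0 g" for g
  proof -
    have "g x = 0\<^sub>m n n" if x: "x \<in> ?C" for x
    proof -
      have "x + x = x" using carrier0[OF add_carrier_mat[OF x] x] .
      hence "g x + g x = g x" using g x unfolding A_linear_def by metis
      thus ?thesis using mat_self_add g x unfolding A_linear_def by metis
    qed
    moreover have "0\<^sub>m 0 n \<in> ?C" by simp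
    ultimately show ?thesis using carrier0 by blast
  qed
  have h: "herm_form bar n (zform n)"
    unfolding zform_def herm_form_def prod.case
  proof (intro conjI)
    show "\<forall>g. A_linear n 0 g \<longrightarrow> (\<exists>!y. y \<in> ?C \<and> (\<forall>x\<in>?C. g x = 0\<^sub>m n n))" using ns by blast
  qed (auto simp: sigma_zero)
  have "submodule n 0 ?C" unfolding submodule_def by auto
  moreover have "?C = {y \<in> ?C. \<forall>x\<in>?C. (0\<^sub>m n n :: 'd mat) = 0\<^sub>m n n}" by simp
  ultimately show ?thesis unfolding metabolic_def using h by (auto simp: zform_def)
qed

lemma in_I_even:
  assumes "herm_form bar n f" "even (rank f)"
  shows "in_I bar n f"
  unfolding in_I_def witt_equiv_def
  using assms zform_metabolic isometric_refl by blast

lemma metabolic_even: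
  assumes "metabolic bar n f" "0 < n"
  shows "even (rank f)"
proof -
  obtain k h where f: "f = (k,h)" by (cases f)
  from assms(1) have H: "herm_form bar n (k,h)" and
    "\<exists>L. submodule n k L \<and> L = {y \<in> carrier_mat k n. \<forall>x\<in>L. h x y = 0\<^sub>m n n}"
    unfolding metabolic_def f by auto
  then obtain L where L: "submodule n k L" "L = {y \<in> carrier_mat k n. \<forall>x\<in>L. h x y = 0\<^sub>m n n}" by blast
  interpret M: meta bar n k h L using H L assms(2) by unfold_locales
  show ?thesis using M.even_rank by (simp add: f rank_def)
qed

lemma bar_pow: "bar a = a \<Longrightarrow> bar (a ^ i) = a ^ i"
  by (induction i) (auto simp: mul power_commutes)

lemma foe_herm:
  assumes a: "bar a = a" "a \<noteq> 0" and n: "0 < n"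
  shows "is \<noteq> [] \<Longrightarrow> herm_form bar n (form_of_exps bar n a is) \<and> rank (form_of_exps bar n a is) = length is"
proof (induction "is")
  case Nil
  thus ?case by simp
next
  case (Cons i vs)
  have hi: "herm_form bar n (h_form bar n (a ^ i))"
    using hform_herm[OF bar_pow[OF a(1)] _ n] a(2) by simp
  have hp: "h_form bar n (a ^ i) = (1, snd (h_form bar n (a ^ i)))" by (simp add: h_form_def)
  show ?case
  proof (cases "vs = []")
    case True
    thus ?thesis using hi by (simp add: rank_def h_form_def)
  next
    case False
    then obtain v vs' where vs: "vs = v # vs'" by (cases vs) auto
    let ?F = "form_of_exps bar n a vs"
    have IH: "herm_form bar n ?F" "rank ?F = length vs" using Cons.IH False by auto
    have Fp: "?F = (fst ?F, snd ?F)" by simp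
    have e: "form_of_exps bar n a (i # vs) = osum n (h_form bar n (a ^ i)) ?F" by (simp add: vs)
    have "herm_form bar n (osum n (1, snd (h_form bar n (a ^ i))) (fst ?F, snd ?F))"
      using osum_herm[of n 1 "snd (h_form bar n (a ^ i))" "fst ?F" "snd ?F"] hi hp IH(1) Fp n by simp
    hence "herm_form bar n (form_of_exps bar n a (i # vs))" using e hp Fp by metis
    moreover have "rank (form_of_exps bar n a (i # vs)) = length (i # vs)"
      using e rank_osum[of n "h_form bar n (a ^ i)" ?F] IH(2) by (simp add: rank_def h_form_def)
    ultimately show ?thesis by simp
  qed
qed

end

theorem mainTheorem14:
  fixes Fs :: "'d::division_ring set" and bar :: "'d \<Rightarrow> 'd"
    and n :: nat and a :: 'd and ps qs :: "nat list"
  assumes "central_subfield Fs" and "formally_real Fs"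
    and "fin_dim_over Fs" and "centre_deg_le2 Fs"
    and "F_involution Fs bar"
    and "n \<ge> 1"
    and "bar a = a" and "a \<noteq> 0"
    and "ps \<noteq> []" and "qs \<noteq> []"
    and "in_I bar n (form_of_exps bar n a (box_exps ps qs))"
  shows "in_I bar n (form_of_exps bar n a ps) \<or> in_I bar n (form_of_exps bar n a qs)"
proof -
  interpret invol bar using invol_of[OF assms(5)] .
  have n: "0 < n" using assms(6) by simp
  have bne: "box_exps ps qs \<noteq> []" using assms(9,10) length_box[of ps qs] by auto
  have rb: "rank (form_of_exps bar n a (box_exps ps qs)) = length ps * length qs"
    using foe_herm[OF assms(7,8) n bne] length_box by simp
  obtain g m1 m2 where g: "herm_form bar n g" "even (rank g)" "metabolic bar n m1" "metabolic bar n m2"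
    "isometric n (osum n (form_of_exps bar n a (box_exps ps qs)) m1) (osum n g m2)"
    using assms(11) unfolding in_I_def witt_equiv_def by blast
  have "rank (osum n (form_of_exps bar n a (box_exps ps qs)) m1) = rank (osum n g m2)"
    by (rule isometric_rank[OF g(5) n])
  hence "length ps * length qs + rank m1 = rank g + rank m2" by (simp add: rank_osum rb)
  moreover have "even (rank m1)" "even (rank m2)" using metabolic_even g(3,4) n by auto
  ultimately have "even (length ps * length qs)" using g(2) by (metis even_add)
  hence "even (length ps) \<or> even (length qs)" by simp
  thus ?thesis
  proof
    assume "even (length ps)"
    thus ?thesis using foe_herm[OF assms(7,8) n assms(9)] in_I_even by auto
  next
    assume "even (length qs)"
    thus ?thesis using foe_herm[OF assms(7,8) n assms(10)] in_I_even by auto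
  qed
qed


end
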